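(* Let $\mathfrak{G}$ be a non-redundant splitting assembly graph and $\mathfrak{P}$ a set of genome path candidates in $\mathfrak{G}$. Then $$Labels(\mathrm{OGA}(\mathfrak{P}))=\mathrm{Superstrings}(\mathrm{OA}(Labels(\mathfrak{P})),V(\mathfrak{G})),$$ where $V(\mathfrak{G})$ is the set of vertex labels of $\mathfrak{G}$.
   Context: All strings are over a fixed finite alphabet $\Sigma$. A cyclic string is a bi-infinite periodic word $\mathbb{Z}\to\Sigma$, considered up to shifting indices; for a nonempty finite string $x$, $\langle x\rangle$ is the cyclic string repeating $x$ in both directions. Finite substrings of cyclic strings are contiguous blocks; a cyclic string is a substring only of itself. A string $u$ is a proper infix of $w$ if $w=aub$ with $a,b$ nonempty. An abstract assembly graph is a finite directed multigraph in which each vertex and edge carries a label (a finite or cyclic string) such that for every edge $e$ from $u$ to $v$, $Label(u)$ is a prefix and $Label(v)$ a suffix of $Label(e)$. An edge $e$ from $u$ to $v$ is a prefix edge if $Label(e)=Label(v)$, a suffix edge if $Label(e)=Label(u)$. An assembly graph is an abstract assembly graph in which every vertex and edge lies on a directed cycle and no edge is both a prefix and a suffix edge. The label of a walk $v_0,e_1,\dots,e_n,v_n$ is $Label(e_1)$ followed, for $i\ge 2$, by $Label(e_i)$ with its first $|Label(v_{i-1})|$ characters removed; a walk with no edges has its vertex label. A circuit is a primitive closed walk up to rotation; if its walk label is $Label(v_0)x$, its label is $\langle x\rangle$. $P$ is an inner subwalk of $Q$ if $Q=APB$ with walks $A,B$ each having at least one edge. The graph is non-redundant if whenever $Label(P)$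 is a proper infix of $Label(Q)$ for walks $P,Q$, $P$ is an inner subwalk of $Q$. The graph is splitting if any two distinct edges leaving a vertex $v$ have labels whose longest common prefix is $Label(v)$, and any two distinct edges entering a vertex $u$ have labels whose longest common suffix is $Label(u)$. A genome path candidate is a finite collection of circuits; a genome candidate is a finite collection of cyclic strings; $Labels$ replaces circuits/walks by their labels (elementwise on sets). For a set $\mathfrak{P}$ of genome path candidates, $\mathrm{OGA}(\mathfrak{P})$ is the set of walks that are subwalks (possibly wrapping around) of some circuit of every candidate in $\mathfrak{P}$ and are maximal under the subwalk relation. For a set $\mathfrak{C}$ of genome candidates, $\mathrm{OA}(\mathfrak{C})$ is the set of strings that are substrings of some element of every candidate in $\mathfrak{C}$ and are maximal under the substring relation. For sets of strings $S,V$, $\mathrm{Superstrings}(S,V)$ is the set of strings in $S$ containing at least one element of $V$ as a substring. *)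

theory Defs
  imports Main "HOL-Library.Sublist"
begin

text \<open>A cyclic string is a bi-infinite periodic word Z -> Sigma considered up to shifting.
  We represent it canonically by the set of all its shifts (a set of functions int => 'x).\<close>

definition cyc :: "'x list \<Rightarrow> (int \<Rightarrow> 'x) set" where
  "cyc x = {(\<lambda>i. x ! nat ((i + k) mod int (length x))) | k. True}"

datatype 'a word = Fin "'a list" | Cyc "(int \<Rightarrow> 'a) set"

definition valid_word :: "'a word \<Rightarrow> bool" where
  "valid_word s \<longleftrightarrow> (case s of Fin _ \<Rightarrow> True | Cyc S \<Rightarrow> (\<exists>x. x \<noteq> [] \<and> S = cyc x))"

fun fin_of :: "'a word \<Rightarrow> 'a list" where
  "fin_of (Fin x) = x"
| "fin_of (Cyc _) = []"

fun substr :: "'a word \<Rightarrow> 'a word \<Rightarrow> bool" where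
  "substr (Fin u) (Fin w) = sublist u w"
| "substr (Fin u) (Cyc S) = (\<exists>w\<in>S. u = map (\<lambda>i. w (int i)) [0..<length u])"
| "substr (Cyc S) (Cyc T) = (S = T)"
| "substr (Cyc _) (Fin _) = False"

text \<open>Prefix/suffix of labels; a cyclic string has no distinguished start, so it is
  a prefix/suffix only of itself.\<close>
fun wprefix :: "'a word \<Rightarrow> 'a word \<Rightarrow> bool" where
  "wprefix (Fin u) (Fin w) = prefix u w"
| "wprefix (Cyc S) (Cyc T) = (S = T)"
| "wprefix _ _ = False"

fun wsuffix :: "'a word \<Rightarrow> 'a word \<Rightarrow> bool" where
  "wsuffix (Fin u) (Fin w) = suffix u w"
| "wsuffix (Cyc S) (Cyc T) = (S = T)"
| "wsuffix _ _ = False"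

definition proper_infix :: "'a word \<Rightarrow> 'a word \<Rightarrow> bool" where
  "proper_infix u w \<longleftrightarrow> (\<exists>a x b. a \<noteq> [] \<and> b \<noteq> [] \<and> u = Fin x \<and> w = Fin (a @ x @ b))"

definition longest_common_suffix :: "'a list \<Rightarrow> 'a list \<Rightarrow> 'a list" where
  "longest_common_suffix x y = rev (longest_common_prefix (rev x) (rev y))"

record ('v, 'e, 'a) agraph =
  verts :: "'v set"
  arcs :: "'e set"
  asrc :: "'e \<Rightarrow> 'v"
  atgt :: "'e \<Rightarrow> 'v"
  vlab :: "'v \<Rightarrow> 'a word"
  elab :: "'e \<Rightarrow> 'a word"

text \<open>Finite walks (start vertex + edge list) and circuits (primitive closed walks up to
  rotation, represented canonically by the set of shifts of the periodic edge sequence).\<close>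
datatype ('v, 'e) gwalk = W 'v "'e list" | CW "(int \<Rightarrow> 'e) set"

definition edge_list_walk :: "('v,'e,'a,'b) agraph_scheme \<Rightarrow> 'e list \<Rightarrow> bool" where
  "edge_list_walk G es \<longleftrightarrow> set es \<subseteq> arcs G \<and>
     (\<forall>i. Suc i < length es \<longrightarrow> atgt G (es ! i) = asrc G (es ! Suc i))"

fun is_walk :: "('v,'e,'a,'b) agraph_scheme \<Rightarrow> ('v,'e) gwalk \<Rightarrow> bool" where
  "is_walk G (W v es) \<longleftrightarrow> v \<in> verts G \<and> edge_list_walk G es \<and>
     (es \<noteq> [] \<longrightarrow> asrc G (hd es) = v)"
| "is_walk G (CW _) = False"

definition closed_walk :: "('v,'e,'a,'b) agraph_scheme \<Rightarrow> 'e list \<Rightarrow> bool" where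
  "closed_walk G es \<longleftrightarrow> es \<noteq> [] \<and> edge_list_walk G es \<and> atgt G (last es) = asrc G (hd es)"

definition directed_cycle :: "('v,'e,'a,'b) agraph_scheme \<Rightarrow> 'e list \<Rightarrow> bool" where
  "directed_cycle G es \<longleftrightarrow> closed_walk G es \<and> distinct (map (asrc G) es)"

definition primitive :: "'x list \<Rightarrow> bool" where
  "primitive xs \<longleftrightarrow> \<not> (\<exists>u k. k > 1 \<and> xs = concat (replicate k u))"

fun is_circuit :: "('v,'e,'a,'b) agraph_scheme \<Rightarrow> ('v,'e) gwalk \<Rightarrow> bool" where
  "is_circuit G (CW S) \<longleftrightarrow> (\<exists>es. closed_walk G es \<and> primitive es \<and> S = cyc es)"
| "is_circuit G (W _ _) = False"

definition abstract_assembly_graph :: "('v,'e,'a,'b) agraph_scheme \<Rightarrow> bool" where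
  "abstract_assembly_graph G \<longleftrightarrow> finite (verts G) \<and> finite (arcs G) \<and>
     (\<forall>e\<in>arcs G. asrc G e \<in> verts G \<and> atgt G e \<in> verts G \<and>
        wprefix (vlab G (asrc G e)) (elab G e) \<and> wsuffix (vlab G (atgt G e)) (elab G e))"

definition prefix_edge :: "('v,'e,'a,'b) agraph_scheme \<Rightarrow> 'e \<Rightarrow> bool" where
  "prefix_edge G e \<longleftrightarrow> elab G e = vlab G (atgt G e)"

definition suffix_edge :: "('v,'e,'a,'b) agraph_scheme \<Rightarrow> 'e \<Rightarrow> bool" where
  "suffix_edge G e \<longleftrightarrow> elab G e = vlab G (asrc G e)"

definition assembly_graph :: "('v,'e,'a,'b) agraph_scheme \<Rightarrow> bool" where
  "assembly_graph G \<longleftrightarrow> abstract_assembly_graph G \<and>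
     (\<forall>v\<in>verts G. \<exists>es. directed_cycle G es \<and> v \<in> asrc G ` set es) \<and>
     (\<forall>e\<in>arcs G. \<exists>es. directed_cycle G es \<and> e \<in> set es) \<and>
     (\<forall>e\<in>arcs G. \<not> (prefix_edge G e \<and> suffix_edge G e))"

definition edges_label :: "('v,'e,'a,'b) agraph_scheme \<Rightarrow> 'e list \<Rightarrow> 'a list" where
  "edges_label G es = fin_of (elab G (hd es)) @
     concat (map (\<lambda>e. drop (length (fin_of (vlab G (asrc G e)))) (fin_of (elab G e))) (tl es))"

definition circuit_label :: "('v,'e,'a,'b) agraph_scheme \<Rightarrow> (int \<Rightarrow> 'e) set \<Rightarrow> 'a word" where
  "circuit_label G S = Cyc (cyc (SOME x. \<exists>es. closed_walk G es \<and> primitive es \<and> S = cyc es \<and>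
      edges_label G es = fin_of (vlab G (asrc G (hd es))) @ x))"

fun label :: "('v,'e,'a,'b) agraph_scheme \<Rightarrow> ('v,'e) gwalk \<Rightarrow> 'a word" where
  "label G (W v es) = (if es = [] then vlab G v else Fin (edges_label G es))"
| "label G (CW S) = circuit_label G S"

fun vat :: "('v,'e,'a,'b) agraph_scheme \<Rightarrow> 'v \<Rightarrow> 'e list \<Rightarrow> nat \<Rightarrow> 'v" where
  "vat G u fs 0 = u"
| "vat G u fs (Suc k) = atgt G (fs ! k)"

text \<open>Subwalk relation; subwalks of circuits may wrap around (any number of times).\<close>
fun subwalk :: "('v,'e,'a,'b) agraph_scheme \<Rightarrow> ('v,'e) gwalk \<Rightarrow> ('v,'e) gwalk \<Rightarrow> bool" where
  "subwalk G (W v es) (W u fs) = (\<exists>A B. fs = A @ es @ B \<and> v = vat G u fs (length A))"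
| "subwalk G (W v es) (CW S) =
     (\<exists>w\<in>S. es = map (\<lambda>i. w (int i)) [0..<length es] \<and> v = asrc G (w 0))"
| "subwalk G (CW S) (CW T) = (S = T)"
| "subwalk G (CW _) (W _ _) = False"

definition inner_subwalk :: "('v,'e,'a,'b) agraph_scheme \<Rightarrow> ('v,'e) gwalk \<Rightarrow> ('v,'e) gwalk \<Rightarrow> bool" where
  "inner_subwalk G P Q \<longleftrightarrow> (\<exists>v es u fs A B. P = W v es \<and> Q = W u fs \<and> A \<noteq> [] \<and> B \<noteq> [] \<and>
      fs = A @ es @ B \<and> v = vat G u fs (length A))"

definition non_redundant :: "('v,'e,'a,'b) agraph_scheme \<Rightarrow> bool" where
  "non_redundant G \<longleftrightarrow> (\<forall>P Q. is_walk G P \<and> is_walk G Q \<and> proper_infix (label G P) (label G Q)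
      \<longrightarrow> inner_subwalk G P Q)"

definition splitting :: "('v,'e,'a,'b) agraph_scheme \<Rightarrow> bool" where
  "splitting G \<longleftrightarrow>
     (\<forall>e1\<in>arcs G. \<forall>e2\<in>arcs G. e1 \<noteq> e2 \<and> asrc G e1 = asrc G e2 \<longrightarrow>
        (\<exists>x y. elab G e1 = Fin x \<and> elab G e2 = Fin y \<and>
           vlab G (asrc G e1) = Fin (longest_common_prefix x y))) \<and>
     (\<forall>e1\<in>arcs G. \<forall>e2\<in>arcs G. e1 \<noteq> e2 \<and> atgt G e1 = atgt G e2 \<longrightarrow>
        (\<exists>x y. elab G e1 = Fin x \<and> elab G e2 = Fin y \<and>
           vlab G (atgt G e1) = Fin (longest_common_suffix x y)))"

definition genome_path_candidate :: "('v,'e,'a,'b) agraph_scheme \<Rightarrow> ('v,'e) gwalk set \<Rightarrow> bool" where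
  "genome_path_candidate G P \<longleftrightarrow> finite P \<and> (\<forall>c\<in>P. is_circuit G c)"

definition OGA :: "('v,'e,'a,'b) agraph_scheme \<Rightarrow> ('v,'e) gwalk set set \<Rightarrow> ('v,'e) gwalk set" where
  "OGA G PP = (let X = {x. (is_walk G x \<or> is_circuit G x) \<and> (\<forall>P\<in>PP. \<exists>c\<in>P. subwalk G x c)}
     in {x\<in>X. \<not> (\<exists>y\<in>X. y \<noteq> x \<and> subwalk G x y)})"

definition OA :: "'a word set set \<Rightarrow> 'a word set" where
  "OA CC = (let X = {s. valid_word s \<and> (\<forall>C\<in>CC. \<exists>t\<in>C. substr s t)}
     in {s\<in>X. \<not> (\<exists>t\<in>X. t \<noteq> s \<and> substr s t)})"

definition Superstrings :: "'a word set \<Rightarrow> 'a word set \<Rightarrow> 'a word set" where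
  "Superstrings S V = {s\<in>S. \<exists>v\<in>V. substr v s}"

end

theory Submission
  imports Defs "HOL-Library.Sublist"
begin

lemma app_split: "a @ b = c @ d \<Longrightarrow> length a \<le> length c \<Longrightarrow> \<exists>m. c = a @ m \<and> b = m @ d"
proof -
  assume eq: "a @ b = c @ d" and le: "length a \<le> length c"
  have "take (length a) (a @ b) = take (length a) (c @ d)" using eq by simp
  then have "a = take (length a) c" using le by simp
  then have c: "c = a @ drop (length a) c" by (metis append_take_drop_id)
  then have "a @ b = a @ (drop (length a) c @ d)" using eq by (metis append.assoc)
  then show ?thesis using c by blast
qed

lemma app_split_r: "a @ b = c @ d \<Longrightarrow> length d \<le> length b \<Longrightarrow> \<exists>m. b = m @ d \<and> c = a @ m"
proof -
  assume eq: "a @ b = c @ d" and le: "length d \<le> length b"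
  have "length (a @ b) = length (c @ d)" using eq by simp
  then have "length a \<le> length c" using le by simp
  then obtain m where "c = a @ m" "b = m @ d" using app_split[OF eq] by blast
  then show ?thesis by blast
qed

lemma lcp_prefix: "prefix a b \<Longrightarrow> longest_common_prefix a b = a"
  by (induction a b rule: longest_common_prefix.induct) auto

lemma lcs_suffix: "suffix a b \<Longrightarrow> longest_common_suffix a b = a"
  unfolding longest_common_suffix_def by (simp add: suffix_to_prefix lcp_prefix)

lemma lcs_max: "suffix s x \<Longrightarrow> suffix s y \<Longrightarrow> suffix s (longest_common_suffix x y)"
  unfolding longest_common_suffix_def suffix_to_prefix
  by (simp add: longest_common_prefix_max_prefix)

locale AG =
  fixes G :: "('v, 'e, 'a) agraph"
  assumes asm: "assembly_graph G" and nr: "non_redundant G" and sp: "splitting G"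
begin

definition vl where "vl v = fin_of (vlab G v)"
definition el where "el e = fin_of (elab G e)"
definition dd where "dd e = drop (length (vl (asrc G e))) (el e)"
definition dp where "dp e = take (length (el e) - length (vl (atgt G e))) (el e)"
definition lab where "lab v es = vl v @ concat (map dd es)"

lemma arc_facts:
  assumes "e \<in> arcs G"
  shows "asrc G e \<in> verts G \<and> atgt G e \<in> verts G \<and> elab G e = Fin (el e) \<and>
    vlab G (asrc G e) = Fin (vl (asrc G e)) \<and> vlab G (atgt G e) = Fin (vl (atgt G e)) \<and>
    prefix (vl (asrc G e)) (el e) \<and> suffix (vl (atgt G e)) (el e) \<and>
    \<not> (el e = vl (asrc G e) \<and> el e = vl (atgt G e))"
proof -
  have A: "asrc G e \<in> verts G \<and> atgt G e \<in> verts G \<and>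
        wprefix (vlab G (asrc G e)) (elab G e) \<and> wsuffix (vlab G (atgt G e)) (elab G e)"
    and B: "\<not> (prefix_edge G e \<and> suffix_edge G e)"
    using asm assms unfolding assembly_graph_def abstract_assembly_graph_def by auto
  show ?thesis
  proof (cases "vlab G (asrc G e)")
    case (Fin x)
    then obtain y where y: "elab G e = Fin y" using A by (cases "elab G e") auto
    then obtain z where z: "vlab G (atgt G e) = Fin z" using A by (cases "vlab G (atgt G e)") auto
    show ?thesis using A B Fin y z unfolding vl_def el_def prefix_edge_def suffix_edge_def by auto
  next
    case (Cyc S)
    then have "elab G e = Cyc S" using A by (cases "elab G e") auto
    moreover then have "vlab G (atgt G e) = Cyc S" using A by (cases "vlab G (atgt G e)") auto
    ultimately show ?thesis using B Cyc unfolding prefix_edge_def suffix_edge_def by auto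
  qed
qed

lemma vert_fin: assumes "v \<in> verts G" shows "vlab G v = Fin (vl v)"
proof -
  obtain es where "directed_cycle G es" "v \<in> asrc G ` set es"
    using asm assms unfolding assembly_graph_def by blast
  then obtain e where "e \<in> set es" "asrc G e = v" by auto
  moreover have "set es \<subseteq> arcs G" using \<open>directed_cycle G es\<close>
    unfolding directed_cycle_def closed_walk_def edge_list_walk_def by auto
  ultimately show ?thesis using arc_facts by blast
qed

lemma el_split1: "e \<in> arcs G \<Longrightarrow> el e = vl (asrc G e) @ dd e"
  using arc_facts[of e] unfolding dd_def prefix_def by auto

lemma el_split2: "e \<in> arcs G \<Longrightarrow> el e = dp e @ vl (atgt G e)"
  using arc_facts[of e] unfolding dp_def suffix_def by auto

lemma not_both: "e \<in> arcs G \<Longrightarrow> dd e \<noteq> [] \<or> dp e \<noteq> []"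
  using arc_facts[of e] el_split1[of e] el_split2[of e] by auto

lemma elw_Cons: "edge_list_walk G (e # es) \<longleftrightarrow>
   e \<in> arcs G \<and> edge_list_walk G es \<and> (es \<noteq> [] \<longrightarrow> atgt G e = asrc G (hd es))"
proof
  assume a: "edge_list_walk G (e # es)"
  have 1: "e \<in> arcs G" "set es \<subseteq> arcs G" using a unfolding edge_list_walk_def by auto
  have 2: "\<forall>i. Suc i < length es \<longrightarrow> atgt G (es ! i) = asrc G (es ! Suc i)"
  proof (intro allI impI)
    fix i assume "Suc i < length es"
    then have "Suc (Suc i) < length (e # es)" by simp
    then show "atgt G (es ! i) = asrc G (es ! Suc i)" using a unfolding edge_list_walk_def
      by (metis nth_Cons_Suc)
  qed
  have 3: "es \<noteq> [] \<longrightarrow> atgt G e = asrc G (hd es)"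
  proof
    assume "es \<noteq> []"
    then have "Suc 0 < length (e # es)" by simp
    then show "atgt G e = asrc G (hd es)" using a \<open>es \<noteq> []\<close> unfolding edge_list_walk_def
      by (metis hd_conv_nth nth_Cons_0 nth_Cons_Suc)
  qed
  show "e \<in> arcs G \<and> edge_list_walk G es \<and> (es \<noteq> [] \<longrightarrow> atgt G e = asrc G (hd es))"
    using 1 2 3 unfolding edge_list_walk_def by auto
next
  assume a: "e \<in> arcs G \<and> edge_list_walk G es \<and> (es \<noteq> [] \<longrightarrow> atgt G e = asrc G (hd es))"
  show "edge_list_walk G (e # es)" unfolding edge_list_walk_def
  proof (intro conjI allI impI)
    show "set (e # es) \<subseteq> arcs G" using a unfolding edge_list_walk_def by auto
  next
    fix i assume i: "Suc i < length (e # es)"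
    show "atgt G ((e # es) ! i) = asrc G ((e # es) ! Suc i)"
    proof (cases i)
      case 0 then show ?thesis using a i by (auto simp: hd_conv_nth)
    next
      case (Suc j) then show ?thesis using a i unfolding edge_list_walk_def by auto
    qed
  qed
qed

lemma walk_Nil[simp]: "is_walk G (W u []) \<longleftrightarrow> u \<in> verts G"
  by (simp add: edge_list_walk_def)

lemma walk_Cons: "is_walk G (W u (e # es)) \<longleftrightarrow>
   e \<in> arcs G \<and> asrc G e = u \<and> is_walk G (W (atgt G e) es)"
  using arc_facts[of e] by (auto simp: elw_Cons)

declare is_walk.simps(1)[simp del]

lemma vat_Cons_Suc[simp]: "vat G u (e # fs) (Suc k) = vat G (atgt G e) fs k"
  by (cases k) auto

lemma vat_append: "k \<le> length A \<Longrightarrow> vat G u (A @ B) k = vat G u A k"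
  by (cases k) (auto simp: nth_append)

lemma vat_append2: "vat G u (A @ B) (length A + k) = vat G (vat G u A (length A)) B k"
  by (cases k) (auto simp: nth_append vat_append)

lemma vat_last: "A \<noteq> [] \<Longrightarrow> vat G u A (length A) = atgt G (last A)"
  by (cases "length A") (auto simp: last_conv_nth)

declare vat.simps(2)[simp del]

lemma walk_append: "is_walk G (W u (A @ B)) \<longleftrightarrow>
   is_walk G (W u A) \<and> is_walk G (W (vat G u A (length A)) B)"
proof (induction A arbitrary: u)
  case Nil then show ?case using arc_facts by (cases B) (auto simp: walk_Cons)
next
  case (Cons e A) then show ?case by (auto simp: walk_Cons)
qed

lemma walk_vert: "is_walk G (W u es) \<Longrightarrow> u \<in> verts G" by (simp add: is_walk.simps)

lemma lab_Nil[simp]: "lab v [] = vl v" by (simp add: lab_def)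

lemma lab_append: "lab u (A @ B) = lab u A @ concat (map dd B)"
  by (simp add: lab_def)

lemma lab_Cons: "is_walk G (W u (e # es)) \<Longrightarrow> lab u (e # es) = dp e @ lab (atgt G e) es"
  using el_split1[of e] el_split2[of e] by (auto simp: lab_def walk_Cons)

lemma lab_dp: "is_walk G (W u es) \<Longrightarrow> lab u es = concat (map dp es) @ vl (vat G u es (length es))"
proof (induction es arbitrary: u)
  case Nil then show ?case by simp
next
  case (Cons e es)
  then have "is_walk G (W (atgt G e) es)" by (simp add: walk_Cons)
  then show ?case using Cons lab_Cons by simp
qed

lemma lab_suffix: "is_walk G (W u es) \<Longrightarrow> suffix (vl (vat G u es (length es))) (lab u es)"
  using lab_dp unfolding suffix_def by metis

lemma edges_label_eq: "edges_label G es = el (hd es) @ concat (map dd (tl es))"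
  unfolding edges_label_def dd_def vl_def el_def by simp

lemma label_walk: assumes "is_walk G (W v es)" shows "label G (W v es) = Fin (lab v es)"
proof (cases es)
  case Nil then show ?thesis using assms vert_fin by simp
next
  case (Cons e es')
  then have "e \<in> arcs G" "asrc G e = v" using assms by (auto simp: walk_Cons)
  then show ?thesis using Cons el_split1[of e] by (simp add: edges_label_eq lab_def)
qed

lemma lab_sub:
  assumes "is_walk G (W u (A @ es @ B))" "v = vat G u (A @ es @ B) (length A)"
  shows "\<exists>Z. lab u A = Z @ vl v \<and> lab u (A @ es @ B) = Z @ lab v es @ concat (map dd B)"
proof -
  have w: "is_walk G (W u A)" using assms walk_append by blast
  have "v = vat G u A (length A)" using assms vat_append by simp
  then obtain Z where "lab u A = Z @ vl v" using lab_suffix[OF w] unfolding suffix_def by auto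
  then show ?thesis by (auto simp: lab_append lab_def)
qed

lemma nr':
  assumes "is_walk G (W v es)" "is_walk G (W u fs)" "lab u fs = X @ lab v es @ Y" "X \<noteq> []" "Y \<noteq> []"
  shows "\<exists>A B. A \<noteq> [] \<and> B \<noteq> [] \<and> fs = A @ es @ B \<and> v = vat G u fs (length A)"
proof -
  have "proper_infix (label G (W v es)) (label G (W u fs))"
    using assms label_walk unfolding proper_infix_def by auto
  then have "inner_subwalk G (W v es) (W u fs)" using nr assms unfolding non_redundant_def by blast
  then show ?thesis unfolding inner_subwalk_def by auto
qed

end

context AG begin

lemma SC:
  assumes "is_walk G (W u A)" "A \<noteq> []" "concat (map dd A) = []"
  shows "length (vl (vat G u A (length A))) < length (vl u)"
  using assms
proof (induction A arbitrary: u)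
  case Nil then show ?case by simp
next
  case (Cons h A')
  have h: "h \<in> arcs G" "asrc G h = u" "is_walk G (W (atgt G h) A')" using Cons.prems walk_Cons by auto
  have "dd h = []" using Cons.prems by simp
  then have "dp h \<noteq> []" using not_both h by auto
  moreover have "vl u = dp h @ vl (atgt G h)" using el_split1[OF h(1)] el_split2[OF h(1)] \<open>dd h = []\<close> h by simp
  ultimately have lt: "length (vl (atgt G h)) < length (vl u)" by simp
  show ?case
  proof (cases "A' = []")
    case True then show ?thesis using lt by (simp add: vat_Cons_Suc)
  next
    case False
    then have "length (vl (vat G (atgt G h) A' (length A'))) < length (vl (atgt G h))"
      using Cons.IH h Cons.prems by auto
    then show ?thesis using lt by simp
  qed
qed

lemma SC':
  assumes "is_walk G (W u A)" "A \<noteq> []" "concat (map dp A) = []"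
  shows "length (vl u) < length (vl (vat G u A (length A)))"
  using assms
proof (induction A arbitrary: u)
  case Nil then show ?case by simp
next
  case (Cons h A')
  have h: "h \<in> arcs G" "asrc G h = u" "is_walk G (W (atgt G h) A')" using Cons.prems walk_Cons by auto
  have "dp h = []" using Cons.prems by simp
  then have "dd h \<noteq> []" using not_both h by auto
  moreover have "vl (atgt G h) = vl u @ dd h" using el_split1[OF h(1)] el_split2[OF h(1)] \<open>dp h = []\<close> h by simp
  ultimately have lt: "length (vl u) < length (vl (atgt G h))" by simp
  show ?case
  proof (cases "A' = []")
    case True then show ?thesis using lt by (simp add: vat_Cons_Suc)
  next
    case False
    then have "length (vl (atgt G h)) < length (vl (vat G (atgt G h) A' (length A')))"
      using Cons.IH h Cons.prems by auto
    then show ?thesis using lt by simp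
  qed
qed

lemma sp_out: "e1 \<in> arcs G \<Longrightarrow> e2 \<in> arcs G \<Longrightarrow> e1 \<noteq> e2 \<Longrightarrow> asrc G e1 = asrc G e2 \<Longrightarrow>
   longest_common_prefix (el e1) (el e2) = vl (asrc G e1)"
  using sp unfolding splitting_def el_def vl_def by force

lemma sp_in: "e1 \<in> arcs G \<Longrightarrow> e2 \<in> arcs G \<Longrightarrow> e1 \<noteq> e2 \<Longrightarrow> atgt G e1 = atgt G e2 \<Longrightarrow>
   longest_common_suffix (el e1) (el e2) = vl (atgt G e1)"
  using sp unfolding splitting_def el_def vl_def by force

end

context AG begin

lemma align:
  assumes "is_walk G (W u fs)" "is_walk G (W v es)" "lab u fs = X @ lab v es @ Y" "X \<noteq> []" "Y \<noteq> []"
  shows "\<exists>A B. fs = A @ es @ B \<and> v = vat G u fs (length A) \<and> lab u A = X @ vl v"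
  using assms
proof (induction "length fs" arbitrary: u fs X Y rule: less_induct)
  case less
  obtain A0 B0 where A0: "A0 \<noteq> []" "B0 \<noteq> []" "fs = A0 @ es @ B0" "v = vat G u fs (length A0)"
    using nr'[OF less.prems(2,1,3,4,5)] by blast
  obtain f1 A0' where A0s: "A0 = f1 # A0'" using A0(1) by (cases A0) auto
  define fs' where "fs' = A0' @ es @ B0"
  have fs: "fs = f1 # fs'" using A0(3) A0s fs'_def by simp
  have wf: "is_walk G (W (atgt G f1) fs')" "f1 \<in> arcs G" "asrc G f1 = u"
    using less.prems(1) unfolding fs walk_Cons by auto
  have lc: "lab u fs = dp f1 @ lab (atgt G f1) fs'" using lab_Cons less.prems(1) unfolding fs by blast
  show ?case
  proof (cases "length (dp f1) < length X")
    case True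
    have eq1: "dp f1 @ lab (atgt G f1) fs' = X @ (lab v es @ Y)" using lc less.prems(3) by simp
    obtain X' where X': "X = dp f1 @ X'" "lab (atgt G f1) fs' = X' @ lab v es @ Y"
      using app_split[OF eq1] True by auto
    have "X' \<noteq> []" using X'(1) True by auto
    have "length fs' < length fs" using fs by simp
    then obtain A' B' where AB': "fs' = A' @ es @ B'" "v = vat G (atgt G f1) fs' (length A')"
        "lab (atgt G f1) A' = X' @ vl v"
      using less.hyps[OF _ wf(1) less.prems(2) X'(2) \<open>X' \<noteq> []\<close> less.prems(5)] by blast
    have "is_walk G (W u ((f1 # A') @ (es @ B')))" using less.prems(1) unfolding fs AB'(1) by simp
    then have "is_walk G (W u (f1 # A'))" unfolding walk_append by blast
    then have "lab u (f1 # A') = X @ vl v" using lab_Cons X'(1) AB'(3) by simp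
    moreover have "fs = (f1 # A') @ es @ B'" using fs AB'(1) by simp
    moreover have "v = vat G u fs (length (f1 # A'))" using fs AB'(2) by simp
    ultimately show ?thesis by blast
  next
    case False
    have fsl: "fs = butlast fs @ [last fs]" using fs by simp
    have wb: "is_walk G (W u (butlast fs))"
      using less.prems(1) fsl walk_append[of u "butlast fs" "[last fs]"] by simp
    have lb: "lab u fs = lab u (butlast fs) @ dd (last fs)"
      using fsl lab_append[of u "butlast fs" "[last fs]"] by simp
    show ?thesis
    proof (cases "length (dd (last fs)) < length Y")
      case True
      have eq2: "(X @ lab v es) @ Y = lab u (butlast fs) @ dd (last fs)" using lb less.prems(3) by simp
      obtain Y'' where Y'': "Y = Y'' @ dd (last fs)" "lab u (butlast fs) = (X @ lab v es) @ Y''"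
        using app_split_r[OF eq2] True by auto
      have "Y'' \<noteq> []" using Y''(1) True by auto
      have Y3: "lab u (butlast fs) = X @ lab v es @ Y''" using Y''(2) by simp
      have "length (butlast fs) < length fs" using fs by simp
      then obtain A B'' where AB: "butlast fs = A @ es @ B''" "v = vat G u (butlast fs) (length A)"
          "lab u A = X @ vl v"
        using less.hyps[OF _ wb less.prems(2) Y3 less.prems(4) \<open>Y'' \<noteq> []\<close>] by blast
      have "fs = A @ es @ (B'' @ [last fs])" using fsl AB(1) by simp
      moreover have "length A \<le> length (butlast fs)" using AB(1) by simp
      then have "v = vat G u fs (length A)"
        using AB(2) fsl vat_append[of "length A" "butlast fs" u "[last fs]"] by simp
      ultimately show ?thesis using AB(3) by blast
    next
      case False2: False
      obtain Z where Z: "lab u A0 = Z @ vl v" "lab u fs = Z @ lab v es @ concat (map dd B0)"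
        using lab_sub[of u A0 es B0 v] less.prems(1) A0(3,4) by blast
      have wA0: "is_walk G (W u A0)" using less.prems(1) A0(3) walk_append[of u A0 "es @ B0"] by simp
      have l0: "lab u A0 = dp f1 @ lab (atgt G f1) A0'" using lab_Cons wA0 A0s by blast
      have wA0': "is_walk G (W (atgt G f1) A0')" using wA0 A0s walk_Cons by blast
      have "vat G u fs (length A0) = vat G u A0 (length A0)"
        using A0(3) vat_append[of "length A0" A0 u "es @ B0"] by simp
      then have "vat G (atgt G f1) A0' (length A0') = v"
        using A0(4) A0s by (simp add: vat_Cons_Suc)
      then have "length (vl v) \<le> length (lab (atgt G f1) A0')"
        using lab_suffix[OF wA0'] suffix_length_le by metis
      moreover have "length (Z @ vl v) = length (dp f1 @ lab (atgt G f1) A0')"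
        using Z(1) l0 by metis
      then have "length Z + length (vl v) = length (dp f1) + length (lab (atgt G f1) A0')" by simp
      ultimately have z1: "length (dp f1) \<le> length Z" by linarith
      have "B0 = butlast B0 @ [last B0]" using A0(2) by simp
      moreover have "concat (map dd (butlast B0 @ [last B0])) = concat (map dd (butlast B0)) @ dd (last B0)"
        by simp
      ultimately have "concat (map dd B0) = concat (map dd (butlast B0)) @ dd (last B0)"
        by metis
      moreover have "last fs = last B0" using A0(2,3) by simp
      ultimately have z2: "length (dd (last fs)) \<le> length (concat (map dd B0))" by simp
      have "length (X @ lab v es @ Y) = length (Z @ lab v es @ concat (map dd B0))"
        using Z(2) less.prems(3) by simp
      then have "length X + length Y = length Z + length (concat (map dd B0))" by simp
      then have "length X = length Z" using z1 z2 False False2 by linarith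
      moreover have "X @ (lab v es @ Y) = Z @ (lab v es @ concat (map dd B0))"
        using Z(2) less.prems(3) by simp
      ultimately have "X = Z" using append_eq_append_conv by blast
      then show ?thesis using A0(3,4) Z(1) by blast
    qed
  qed
qed

end

context AG begin

lemma concat_snoc: "concat (map f (xs @ [x])) = concat (map f xs) @ f x" by simp

lemma DR1:
  assumes w: "is_walk G (W u Gs)" and cc: "concat (map dd Gs) \<noteq> []" and f: "f \<in> arcs G"
    and fu: "asrc G f = u" and fd: "dd f = []"
  shows "Gs \<noteq> [] \<and> f = hd Gs"
proof -
  define v' where "v' = atgt G f"
  have v'V: "v' \<in> verts G" using arc_facts[OF f] v'_def by simp
  have dpf: "dp f \<noteq> []" using not_both[OF f] fd by simp
  have vlu: "vl u = dp f @ vl v'" using el_split1[OF f] el_split2[OF f] fd fu v'_def by simp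
  have eq: "lab u Gs = dp f @ lab v' [] @ concat (map dd Gs)" using vlu by (simp add: lab_def)
  have wv': "is_walk G (W v' [])" using v'V by simp
  obtain A B where AB: "Gs = A @ [] @ B" "v' = vat G u Gs (length A)" "lab u A = dp f @ vl v'"
    using align[OF w wv' eq dpf cc] by blast
  have GsN: "Gs \<noteq> []" using cc by auto
  have wA: "is_walk G (W u A)" using w AB(1) walk_append by simp
  have vA: "vat G u A (length A) = v'" using AB(1,2) vat_append[of "length A" A u B] by simp
  have "length (lab u A) = length (vl u)" using AB(3) vlu by simp
  then have cA: "concat (map dd A) = []" by (simp add: lab_def)
  have AN: "A \<noteq> []"
  proof
    assume "A = []"
    then have "vl u = dp f @ vl u" using AB(3) vA by simp
    then show False using dpf by simp
  qed
  obtain A' h where Ah: "A = A' @ [h]" using AN by (metis append_butlast_last_id)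
  have wA': "is_walk G (W u A')" and wh: "is_walk G (W (vat G u A' (length A')) [h])"
    using wA Ah walk_append by auto
  define w' where "w' = vat G u A' (length A')"
  have h: "h \<in> arcs G" "asrc G h = w'" using wh walk_Cons w'_def by auto
  have th: "atgt G h = v'" using vA Ah vat_last[of A u] by simp
  have ddh: "dd h = []" and cA': "concat (map dd A') = []" using cA Ah by auto
  have "lab u A' = vl u" using cA' by (simp add: lab_def)
  then have sw: "suffix (vl w') (vl u)" using lab_suffix[OF wA'] w'_def by simp
  have dph: "dp h \<noteq> []" using not_both[OF h(1)] ddh by simp
  have elh: "el h = vl w'" using el_split1[OF h(1)] ddh h(2) by simp
  have "el h = dp h @ vl v'" using el_split2[OF h(1)] th by simp
  then have "length (vl w') = length (dp h) + length (vl v')" using elh by simp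
  then have lw: "length (vl v') < length (vl w')" using dph by simp
  show ?thesis
  proof (cases "h = f")
    case True
    show ?thesis
    proof (cases "A' = []")
      case True
      then show ?thesis using AB(1) Ah \<open>h = f\<close> by simp
    next
      case False
      have "length (vl w') < length (vl u)" using SC[OF wA' False cA'] w'_def by simp
      moreover have "w' = u" using h(2) fu \<open>h = f\<close> by simp
      ultimately show ?thesis by simp
    qed
  next
    case False
    have "longest_common_suffix (el h) (el f) = vl (atgt G h)"
      using sp_in[OF h(1) f False] th v'_def by simp
    moreover have "el f = vl u" using el_split1[OF f] fd fu by simp
    ultimately have "vl w' = vl v'" using lcs_suffix[OF sw] elh th by simp
    then show ?thesis using lw by simp
  qed
qed

lemma DR:
  assumes wF: "is_walk G (W u F)" and wG: "is_walk G (W u Gs)"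
    and cF: "concat (map dd F) = b # p" and cG: "concat (map dd Gs) = b # q"
  shows "F \<noteq> [] \<and> Gs \<noteq> [] \<and> hd F = hd Gs"
proof -
  have FN: "F \<noteq> []" and GN: "Gs \<noteq> []" using cF cG by auto
  obtain f F' where Fs: "F = f # F'" using FN by (cases F) auto
  obtain g G' where Gss: "Gs = g # G'" using GN by (cases Gs) auto
  have f: "f \<in> arcs G" "asrc G f = u" using wF Fs walk_Cons by auto
  have g: "g \<in> arcs G" "asrc G g = u" using wG Gss walk_Cons by auto
  have nF: "concat (map dd F) \<noteq> []" and nG: "concat (map dd Gs) \<noteq> []" using cF cG by auto
  have "f = g"
  proof (cases "dd f = []")
    case True
    then show ?thesis using DR1[OF wG nG f(1) f(2) True] Gss g by simp
  next
    case False1: False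
    show ?thesis
    proof (cases "dd g = []")
      case True
      then show ?thesis using DR1[OF wF nF g(1) g(2) True] Fs f by simp
    next
      case False
      obtain p' where p': "dd f = b # p'" using cF Fs False1 by (cases "dd f") auto
      obtain q' where q': "dd g = b # q'" using cG Gss False by (cases "dd g") auto
      have pf: "prefix (vl u @ [b]) (el f)" using el_split1[OF f(1)] p' f(2) by simp
      have pg: "prefix (vl u @ [b]) (el g)" using el_split1[OF g(1)] q' g(2) by simp
      show ?thesis
      proof (rule ccontr)
        assume "f \<noteq> g"
        then have "longest_common_prefix (el f) (el g) = vl u" using sp_out[OF f(1) g(1)] f g by simp
        then have "prefix (vl u @ [b]) (vl u)" using longest_common_prefix_max_prefix[OF pf pg] by simp
        then show False using prefix_length_le by fastforce
      qed
    qed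
  qed
  then show ?thesis using Fs Gss by simp
qed

lemma DL1:
  assumes w: "is_walk G (W w Gs)" and cc: "concat (map dp Gs) \<noteq> []" and f: "f \<in> arcs G"
    and fv: "atgt G f = vat G w Gs (length Gs)" and fd: "dp f = []"
  shows "Gs \<noteq> [] \<and> f = last Gs"
proof -
  define v where "v = atgt G f"
  define v' where "v' = asrc G f"
  have v'V: "v' \<in> verts G" using arc_facts[OF f] v'_def by simp
  have ddf: "dd f \<noteq> []" using not_both[OF f] fd by simp
  have vlv: "vl v = vl v' @ dd f" using el_split1[OF f] el_split2[OF f] fd v_def v'_def by simp
  have lw: "lab w Gs = concat (map dp Gs) @ vl v" using lab_dp[OF w] fv v_def by simp
  then have eq: "lab w Gs = concat (map dp Gs) @ lab v' [] @ dd f" using vlv by simp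
  have wv': "is_walk G (W v' [])" using v'V by simp
  obtain A B where AB: "Gs = A @ [] @ B" "v' = vat G w Gs (length A)"
      "lab w A = concat (map dp Gs) @ vl v'"
    using align[OF w wv' eq cc ddf] by blast
  have GsN: "Gs \<noteq> []" using cc by auto
  have wA: "is_walk G (W w A)" and wB: "is_walk G (W (vat G w A (length A)) B)"
    using w AB(1) walk_append by auto
  have vA: "vat G w A (length A) = v'" using AB(1,2) vat_append[of "length A" A w B] by simp
  have "lab w A = concat (map dp A) @ vl v'" using lab_dp[OF wA] vA by simp
  then have "concat (map dp A) = concat (map dp Gs)" using AB(3) by simp
  then have cB: "concat (map dp B) = []" using AB(1) by simp
  have vB: "vat G v' B (length B) = v"
    using vat_append2[of w A B "length B"] AB(1) fv v_def vA by simp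
  have BN: "B \<noteq> []"
  proof
    assume "B = []"
    then have "v' = v" using vB by simp
    then show False using vlv ddf by simp
  qed
  obtain h B' where Bh: "B = h # B'" using BN by (cases B) auto
  have h: "h \<in> arcs G" "asrc G h = v'" "is_walk G (W (atgt G h) B')" using wB vA Bh walk_Cons by auto
  define w' where "w' = atgt G h"
  have dph: "dp h = []" and cB': "concat (map dp B') = []" using cB Bh by auto
  have vB': "vat G w' B' (length B') = v" using vB Bh w'_def by (simp add: vat_Cons_Suc)
  have "lab w' B' = vl v" using lab_dp[OF h(3)[folded w'_def]] cB' vB' by simp
  then have pw: "prefix (vl w') (vl v)" unfolding lab_def prefix_def by metis
  have ddh: "dd h \<noteq> []" using not_both[OF h(1)] dph by simp
  have elh: "el h = vl w'" using el_split2[OF h(1)] dph w'_def by simp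
  have "el h = vl v' @ dd h" using el_split1[OF h(1)] h(2) by simp
  then have "length (vl w') = length (vl v') + length (dd h)" using elh by simp
  then have lw': "length (vl v') < length (vl w')" using ddh by simp
  show ?thesis
  proof (cases "h = f")
    case True
    show ?thesis
    proof (cases "B' = []")
      case True
      then show ?thesis using AB(1) Bh \<open>h = f\<close> by simp
    next
      case False
      have "length (vl w') < length (vl v)" using SC'[OF h(3)[folded w'_def] False cB'] vB' by simp
      moreover have "w' = v" using w'_def v_def \<open>h = f\<close> by simp
      ultimately show ?thesis by simp
    qed
  next
    case False
    have "longest_common_prefix (el h) (el f) = vl (asrc G h)"
      using sp_out[OF h(1) f False] h(2) v'_def by simp
    moreover have "el f = vl v" using el_split2[OF f] fd v_def by simp
    ultimately have "vl w' = vl v'" using lcp_prefix[OF pw] elh h(2) by simp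
    then show ?thesis using lw' by simp
  qed
qed

lemma DL:
  assumes wF: "is_walk G (W w1 F)" and wG: "is_walk G (W w2 Gs)"
    and same: "vat G w1 F (length F) = vat G w2 Gs (length Gs)"
    and cF: "concat (map dp F) = p @ [b]" and cG: "concat (map dp Gs) = q @ [b]"
  shows "F \<noteq> [] \<and> Gs \<noteq> [] \<and> last F = last Gs"
proof -
  have FN: "F \<noteq> []" and GN: "Gs \<noteq> []" using cF cG by auto
  obtain F' f where Fs: "F = F' @ [f]" using FN by (metis append_butlast_last_id)
  obtain G' g where Gss: "Gs = G' @ [g]" using GN by (metis append_butlast_last_id)
  have f: "f \<in> arcs G" using wF Fs walk_append walk_Cons by auto
  have g: "g \<in> arcs G" using wG Gss walk_append walk_Cons by auto
  have tf: "atgt G f = vat G w1 F (length F)" using vat_last[OF FN] Fs by simp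
  have tg: "atgt G g = vat G w2 Gs (length Gs)" using vat_last[OF GN] Gss by simp
  have nF: "concat (map dp F) \<noteq> []" and nG: "concat (map dp Gs) \<noteq> []" using cF cG by auto
  have "f = g"
  proof (cases "dp f = []")
    case True
    have tf2: "atgt G f = vat G w2 Gs (length Gs)" using tf same by simp
    show ?thesis using DL1[OF wG nG f tf2 True] Gss by simp
  next
    case False1: False
    show ?thesis
    proof (cases "dp g = []")
      case True
      have tg2: "atgt G g = vat G w1 F (length F)" using tg same by simp
      show ?thesis using DL1[OF wF nF g tg2 True] Fs by simp
    next
      case False
      have "concat (map dp F') @ dp f = p @ [b]" using cF Fs by simp
      then have "last (concat (map dp F') @ dp f) = b" by simp
      then have "last (dp f) = b" using False1 by simp
      then have p': "dp f = butlast (dp f) @ [b]" using False1 by (metis append_butlast_last_id)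
      have "concat (map dp G') @ dp g = q @ [b]" using cG Gss by simp
      then have "last (concat (map dp G') @ dp g) = b" by simp
      then have "last (dp g) = b" using False by simp
      then have q': "dp g = butlast (dp g) @ [b]" using False by (metis append_butlast_last_id)
      have sf: "suffix ([b] @ vl (atgt G f)) (el f)" using el_split2[OF f] p' unfolding suffix_def by auto
      have sg: "suffix ([b] @ vl (atgt G f)) (el g)" using el_split2[OF g] q' tf tg same unfolding suffix_def by auto
      show ?thesis
      proof (rule ccontr)
        assume "f \<noteq> g"
        then have "longest_common_suffix (el f) (el g) = vl (atgt G f)" using sp_in[OF f g] tf tg same by simp
        then have "suffix ([b] @ vl (atgt G f)) (vl (atgt G f))" using lcs_max[OF sf sg] by simp
        then show False using suffix_length_le by fastforce
      qed
    qed
  qed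
  then show ?thesis using Fs Gss by simp
qed

lemma next_r:
  assumes w1: "is_walk G (W q1 (A1 @ es @ B1))" and w2: "is_walk G (W q2 (A2 @ es @ B2))"
    and v1: "v = vat G q1 (A1 @ es @ B1) (length A1)" and v2: "v = vat G q2 (A2 @ es @ B2) (length A2)"
    and c1: "concat (map dd B1) = b # r1" and c2: "concat (map dd B2) = b # r2"
  shows "B1 \<noteq> [] \<and> B2 \<noteq> [] \<and> hd B1 = hd B2"
proof -
  have key: "is_walk G (W (vat G v es (length es)) B)"
    if w: "is_walk G (W q (A @ es @ B))" and vv: "v = vat G q (A @ es @ B) (length A)" for q A B
  proof -
    have "is_walk G (W (vat G q (A @ es) (length (A @ es))) B)" using w walk_append[of q "A @ es" B] by simp
    moreover have "vat G q (A @ es) (length (A @ es)) = vat G (vat G q A (length A)) es (length es)"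
      using vat_append2[of q A es "length es"] by simp
    moreover have "vat G q A (length A) = v" using vv vat_append[of "length A" A q "es @ B"] by simp
    ultimately show ?thesis by simp
  qed
  show ?thesis using DR[OF key[OF w1 v1] key[OF w2 v2] c1 c2] .
qed

lemma next_l:
  assumes w1: "is_walk G (W q1 (A1 @ es @ B1))" and w2: "is_walk G (W q2 (A2 @ es @ B2))"
    and v1: "v = vat G q1 (A1 @ es @ B1) (length A1)" and v2: "v = vat G q2 (A2 @ es @ B2) (length A2)"
    and c1: "concat (map dp A1) = r1 @ [b]" and c2: "concat (map dp A2) = r2 @ [b]"
  shows "A1 \<noteq> [] \<and> A2 \<noteq> [] \<and> last A1 = last A2"
proof -
  have "is_walk G (W q1 A1)" "is_walk G (W q2 A2)" using w1 w2 walk_append by auto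
  moreover have "vat G q1 A1 (length A1) = vat G q2 A2 (length A2)"
    using v1 v2 vat_append[of "length A1" A1 q1 "es @ B1"] vat_append[of "length A2" A2 q2 "es @ B2"] by simp
  ultimately show ?thesis using DL c1 c2 by blast
qed

end

definition pw :: "'x list \<Rightarrow> nat \<Rightarrow> 'x list" where "pw xs m = concat (replicate m xs)"

lemma pw_0[simp]: "pw xs 0 = []" by (simp add: pw_def)
lemma pw_Suc: "pw xs (Suc m) = xs @ pw xs m" by (simp add: pw_def)
lemma pw_add: "pw xs (a + b) = pw xs a @ pw xs b" by (simp add: pw_def replicate_add)
lemma pw_Suc2: "pw xs (Suc m) = pw xs m @ xs" using pw_add[of xs m 1] by (simp add: pw_def)
lemma length_pw[simp]: "length (pw xs m) = m * length xs" by (simp add: pw_def length_concat sum_list_replicate)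

lemma pw_nth: "i < m * length xs \<Longrightarrow> pw xs m ! i = xs ! (i mod length xs)"
proof (induction m arbitrary: i)
  case 0 then show ?case by simp
next
  case (Suc m)
  show ?case
  proof (cases "i < length xs")
    case True then show ?thesis by (simp add: pw_Suc nth_append)
  next
    case False
    then have "i - length xs < m * length xs" using Suc.prems by simp
    then have "pw xs m ! (i - length xs) = xs ! ((i - length xs) mod length xs)" using Suc.IH by blast
    moreover have "(i - length xs) mod length xs = i mod length xs" using False
      by (simp add: le_mod_geq)
    ultimately show ?thesis using False by (simp add: pw_Suc nth_append)
  qed
qed

lemma map_pw: "concat (map f (pw xs m)) = pw (concat (map f xs)) m"
  by (induction m) (auto simp: pw_Suc)

lemma sublist_trans': "sublist a b \<Longrightarrow> sublist b c \<Longrightarrow> sublist a c"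
  unfolding sublist_def by (metis append.assoc)

lemma suffix_app_len: "suffix a (b @ c) \<Longrightarrow> length a \<le> length c \<Longrightarrow> suffix a c"
proof -
  assume "suffix a (b @ c)" "length a \<le> length c"
  then obtain zs where "b @ c = zs @ a" unfolding suffix_def by blast
  then obtain m where "c = m @ a" using app_split_r \<open>length a \<le> length c\<close> by blast
  then show ?thesis unfolding suffix_def by blast
qed

lemma cyc_elem:
  assumes "w \<in> cyc x" "x \<noteq> []"
  shows "\<exists>r < length x. \<forall>i::nat. w (int i) = x ! ((i + r) mod length x)"
proof -
  obtain k where k: "w = (\<lambda>i. x ! nat ((i + k) mod int (length x)))" using assms(1) unfolding cyc_def by auto
  define n where "n = length x"
  have n0: "n > 0" using assms(2) n_def by simp
  define r where "r = nat (k mod int n)"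
  have rk: "int r = k mod int n" using n0 r_def by simp
  have "r < n" using n0 r_def by (simp add: nat_less_iff)
  moreover have "\<forall>i::nat. w (int i) = x ! ((i + r) mod n)"
  proof
    fix i :: nat
    have "(int i + k) mod int n = (int i + int r) mod int n" using rk by (simp add: mod_add_right_eq)
    also have "\<dots> = int ((i + r) mod n)" by (simp add: of_nat_mod)
    finally show "w (int i) = x ! ((i + r) mod n)" using k n_def by simp
  qed
  ultimately show ?thesis using n_def by blast
qed

lemma cyc_shift_mem: "(\<lambda>i. x ! nat ((i + int r) mod int (length x))) \<in> cyc x"
  unfolding cyc_def by blast

lemma cyc_shift_nth: "(\<lambda>i. x ! nat ((i + int r) mod int (length x))) (int i) = x ! ((i + r) mod length x)"
proof -
  have "(int i + int r) mod int (length x) = int ((i + r) mod length x)" by (simp add: of_nat_mod)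
  then show ?thesis by simp
qed

lemma subcyc:
  assumes "x \<noteq> []"
  shows "substr (Fin z) (Cyc (cyc x)) \<longleftrightarrow> (\<exists>K. sublist z (pw x K))"
proof
  assume "substr (Fin z) (Cyc (cyc x))"
  then obtain w where w: "w \<in> cyc x" "z = map (\<lambda>i. w (int i)) [0..<length z]" by auto
  obtain r where r: "r < length x" "\<forall>i::nat. w (int i) = x ! ((i + r) mod length x)"
    using cyc_elem[OF w(1) assms] by blast
  define K where "K = length z + 1"
  have len: "r + length z \<le> K * length x"
  proof -
    have "length x \<ge> 1" using assms by (cases x) auto
    then have "length z \<le> length z * length x" by simp
    moreover have "K * length x = length z * length x + length x" by (simp add: K_def)
    ultimately show ?thesis using r(1) by linarith
  qed
  have "z = take (length z) (drop r (pw x K))"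
  proof (rule nth_equalityI)
    show "length z = length (take (length z) (drop r (pw x K)))" using len by simp
  next
    fix i assume i: "i < length z"
    have "z ! i = w (int i)" using w(2) i by (metis diff_zero length_upt nth_map nth_upt add_0)
    also have "\<dots> = x ! ((i + r) mod length x)" using r(2) by simp
    also have "\<dots> = pw x K ! (r + i)" using pw_nth[of "r + i" K x] len i by (simp add: add.commute)
    finally show "z ! i = take (length z) (drop r (pw x K)) ! i" using i len by simp
  qed
  then have "pw x K = take r (pw x K) @ z @ drop (length z) (drop r (pw x K))"
    by (metis append_take_drop_id)
  then show "\<exists>K. sublist z (pw x K)" unfolding sublist_def by blast
next
  assume "\<exists>K. sublist z (pw x K)"
  then obtain K ps ss where eq: "pw x K = ps @ z @ ss" unfolding sublist_def by blast
  define w where "w = (\<lambda>i. x ! nat ((i + int (length ps)) mod int (length x)))"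
  have "w \<in> cyc x" unfolding w_def by (rule cyc_shift_mem)
  moreover have "z = map (\<lambda>i. w (int i)) [0..<length z]"
  proof (rule nth_equalityI)
    show "length z = length (map (\<lambda>i. w (int i)) [0..<length z])" by simp
  next
    fix i assume i: "i < length z"
    have "length (pw x K) = length (ps @ z @ ss)" using eq by simp
    then have lt: "length ps + i < K * length x" using i by simp
    have "z ! i = pw x K ! (length ps + i)" using eq i by (simp add: nth_append)
    also have "\<dots> = x ! ((length ps + i) mod length x)" using pw_nth[OF lt] .
    also have "\<dots> = w (int i)" unfolding w_def cyc_shift_nth by (simp add: add.commute)
    finally show "z ! i = map (\<lambda>i. w (int i)) [0..<length z] ! i" using i by simp
  qed
  ultimately show "substr (Fin z) (Cyc (cyc x))" by auto
qed


context AG begin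

lemma cw_basic:
  assumes "closed_walk G c"
  shows "c \<noteq> [] \<and> is_walk G (W (asrc G (hd c)) c) \<and> vat G (asrc G (hd c)) c (length c) = asrc G (hd c)"
proof -
  have c: "c \<noteq> []" "edge_list_walk G c" "atgt G (last c) = asrc G (hd c)"
    using assms unfolding closed_walk_def by auto
  have "hd c \<in> arcs G" using c(1,2) unfolding edge_list_walk_def by auto
  then have "asrc G (hd c) \<in> verts G" using arc_facts by blast
  then have "is_walk G (W (asrc G (hd c)) c)" using c by (simp add: is_walk.simps)
  moreover have "vat G (asrc G (hd c)) c (length c) = asrc G (hd c)" using vat_last[OF c(1)] c(3) by simp
  ultimately show ?thesis using c(1) by blast
qed

lemma cw_conn:
  assumes "closed_walk G c" "i < length c"
  shows "atgt G (c ! i) = asrc G (c ! (Suc i mod length c))"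
proof (cases "Suc i < length c")
  case True
  then show ?thesis using assms unfolding closed_walk_def edge_list_walk_def by simp
next
  case False
  then have si: "Suc i = length c" using assms(2) by simp
  have "c \<noteq> []" using si by auto
  then have "last c = c ! (length c - 1)" by (rule last_conv_nth)
  moreover have "length c - 1 = i" using si by simp
  ultimately have "c ! i = last c" by simp
  moreover have "c ! (Suc i mod length c) = hd c" using si \<open>c \<noteq> []\<close> by (simp add: hd_conv_nth)
  ultimately show ?thesis using assms(1) unfolding closed_walk_def by simp
qed

lemma pw_walk:
  assumes "closed_walk G c"
  shows "is_walk G (W (asrc G (hd c)) (pw c m)) \<and> vat G (asrc G (hd c)) (pw c m) (length (pw c m)) = asrc G (hd c)"
proof (induction m)
  case 0
  have "asrc G (hd c) \<in> verts G" using cw_basic[OF assms] walk_vert by blast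
  then show ?case by simp
next
  case (Suc m)
  have b: "is_walk G (W (asrc G (hd c)) c)" "vat G (asrc G (hd c)) c (length c) = asrc G (hd c)"
    using cw_basic[OF assms] by auto
  have "is_walk G (W (asrc G (hd c)) (c @ pw c m))" using walk_append b Suc.IH by simp
  moreover have "vat G (asrc G (hd c)) (c @ pw c m) (length c + length (pw c m)) = asrc G (hd c)"
    using vat_append2[of "asrc G (hd c)" c "pw c m" "length (pw c m)"] b Suc.IH by simp
  ultimately show ?case by (simp add: pw_Suc)
qed

lemma pw_vat:
  assumes "closed_walk G c" "j \<le> length (pw c M)"
  shows "vat G (asrc G (hd c)) (pw c M) j = asrc G (c ! (j mod length c))"
proof (cases j)
  case 0
  have "c \<noteq> []" using assms(1) unfolding closed_walk_def by simp
  then show ?thesis using 0 by (simp add: hd_conv_nth)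
next
  case (Suc j')
  have cn: "c \<noteq> []" using assms(1) unfolding closed_walk_def by simp
  have lt: "j' < M * length c" using assms(2) Suc by simp
  have "vat G (asrc G (hd c)) (pw c M) j = atgt G (pw c M ! j')" using Suc by (simp add: vat.simps)
  also have "\<dots> = atgt G (c ! (j' mod length c))" using pw_nth[OF lt] by simp
  also have "\<dots> = asrc G (c ! (Suc (j' mod length c) mod length c))"
    using cw_conn[OF assms(1)] cn by simp
  also have "Suc (j' mod length c) mod length c = j mod length c" using Suc by (simp add: mod_Suc_eq)
  finally show ?thesis .
qed

lemma cw_x_ne: assumes "closed_walk G c" shows "concat (map dd c) \<noteq> []"
proof
  assume a: "concat (map dd c) = []"
  have b: "c \<noteq> []" "is_walk G (W (asrc G (hd c)) c)" "vat G (asrc G (hd c)) c (length c) = asrc G (hd c)"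
    using cw_basic[OF assms] by auto
  show False using SC[OF b(2) b(1) a] b(3) by simp
qed

lemma lab_pw: "lab v (pw c m) = vl v @ pw (concat (map dd c)) m"
  by (simp add: lab_def map_pw)

lemma el_cw: assumes "closed_walk G es" shows "edges_label G es = vl (asrc G (hd es)) @ concat (map dd es)"
proof -
  have "es \<noteq> []" "hd es \<in> arcs G" using assms unfolding closed_walk_def edge_list_walk_def by auto
  then show ?thesis using el_split1[of "hd es"] edges_label_eq[of es]
    by (metis append.assoc concat.simps(2) list.collapse list.simps(9))
qed

lemma rep:
  assumes "is_circuit G (CW S)"
  shows "\<exists>c. closed_walk G c \<and> S = cyc c \<and> label G (CW S) = Cyc (cyc (concat (map dd c)))"
proof -
  obtain c0 where c0: "closed_walk G c0" "primitive c0" "S = cyc c0" using assms by auto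
  define P where "P = (\<lambda>x. \<exists>es. closed_walk G es \<and> primitive es \<and> S = cyc es \<and>
      edges_label G es = fin_of (vlab G (asrc G (hd es))) @ x)"
  have "P (concat (map dd c0))" unfolding P_def using c0 el_cw[OF c0(1)] vl_def by metis
  then have "P (SOME x. P x)" by (rule someI)
  then obtain es where es: "closed_walk G es" "S = cyc es"
    "edges_label G es = vl (asrc G (hd es)) @ (SOME x. P x)" unfolding P_def vl_def by blast
  have "(SOME x. P x) = concat (map dd es)" using es(3) el_cw[OF es(1)] by simp
  moreover have "label G (CW S) = Cyc (cyc (SOME x. P x))" unfolding P_def by (simp add: circuit_label_def)
  ultimately show ?thesis using es by metis
qed

lemma H2:
  assumes "closed_walk G c" "sublist z (lab (asrc G (hd c)) (pw c M))"
  shows "\<exists>K. sublist z (pw (concat (map dd c)) K)"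
proof -
  define x where "x = concat (map dd c)"
  define v0 where "v0 = asrc G (hd c)"
  define K0 where "K0 = length (vl v0) + 1"
  have xn: "x \<noteq> []" using cw_x_ne[OF assms(1)] x_def by simp
  have pwk: "is_walk G (W v0 (pw c K0))" "vat G v0 (pw c K0) (length (pw c K0)) = v0"
    using pw_walk[OF assms(1)] v0_def by auto
  have "suffix (vl v0) (vl v0 @ pw x K0)" using lab_suffix[OF pwk(1)] pwk(2) lab_pw x_def by metis
  moreover have "length (vl v0) \<le> length (pw x K0)"
  proof -
    have "length x \<ge> 1" using xn by (cases x) auto
    then have "K0 \<le> K0 * length x" by simp
    then show ?thesis using K0_def by simp
  qed
  ultimately have "suffix (vl v0) (pw x K0)" using suffix_app_len by blast
  then obtain pre where pre: "pw x K0 = pre @ vl v0" unfolding suffix_def by blast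
  have "pw x (K0 + M) = pre @ (vl v0 @ pw x M) @ []" using pw_add[of x K0 M] pre by simp
  then have "sublist (lab v0 (pw c M)) (pw x (K0 + M))" using lab_pw x_def unfolding sublist_def by metis
  then show ?thesis using assms(2) sublist_trans' v0_def x_def by blast
qed

lemma H3:
  assumes "closed_walk G c" "sublist z (pw (concat (map dd c)) K)"
  shows "\<exists>M X Y. lab (asrc G (hd c)) (pw c M) = X @ z @ Y \<and> X \<noteq> [] \<and> Y \<noteq> []"
proof -
  define x where "x = concat (map dd c)"
  have xn: "x \<noteq> []" using cw_x_ne[OF assms(1)] x_def by simp
  obtain ps ss where eq: "pw x K = ps @ z @ ss" using assms(2) x_def unfolding sublist_def by blast
  have "pw x (Suc (Suc K)) = x @ pw x (Suc K)" by (rule pw_Suc)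
  moreover have "pw x (Suc K) = pw x K @ x" by (rule pw_Suc2)
  ultimately have "pw x (Suc (Suc K)) = x @ pw x K @ x" by simp
  then have "lab (asrc G (hd c)) (pw c (Suc (Suc K))) = (vl (asrc G (hd c)) @ x @ ps) @ z @ (ss @ x)"
    using eq lab_pw x_def by simp
  then show ?thesis using xn by blast
qed

lemma H4:
  assumes cw: "closed_walk G c" and sw: "subwalk G (W v es) (CW (cyc c))"
  shows "\<exists>M A B. pw c M = A @ es @ B \<and> v = vat G (asrc G (hd c)) (pw c M) (length A)"
proof -
  obtain w where w: "w \<in> cyc c" "es = map (\<lambda>i. w (int i)) [0..<length es]" "v = asrc G (w 0)"
    using sw by auto
  have cn: "c \<noteq> []" using cw unfolding closed_walk_def by simp
  obtain r where r: "r < length c" "\<forall>i::nat. w (int i) = c ! ((i + r) mod length c)"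
    using cyc_elem[OF w(1) cn] by blast
  define M where "M = length es + 1"
  define P where "P = pw c M"
  have len: "r + length es \<le> length P"
  proof -
    have "length c \<ge> 1" using cn by (cases c) auto
    then have "length es \<le> length es * length c" by simp
    moreover have "M * length c = length es * length c + length c" by (simp add: M_def)
    moreover have "length P = M * length c" by (simp add: P_def)
    ultimately show ?thesis using r(1) by linarith
  qed
  have es: "es = take (length es) (drop r P)"
  proof (rule nth_equalityI)
    show "length es = length (take (length es) (drop r P))" using len by simp
  next
    fix i assume i: "i < length es"
    have "es ! i = w (int i)" using w(2) i by (metis diff_zero length_upt nth_map nth_upt add_0)
    also have "\<dots> = c ! ((i + r) mod length c)" using r(2) by simp
    also have "\<dots> = P ! (r + i)" using pw_nth[of "r + i" M c] len i P_def by (simp add: add.commute)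
    finally show "es ! i = take (length es) (drop r P) ! i" using i len by simp
  qed
  then have dec: "P = take r P @ es @ drop (length es) (drop r P)" by (metis append_take_drop_id)
  have lA: "length (take r P) = r" using len by simp
  have "v = asrc G (c ! r)" using w(3) r(2)[rule_format, of 0] r(1) by simp
  also have "\<dots> = vat G (asrc G (hd c)) P r" using pw_vat[OF cw, of r M] len r(1) P_def by simp
  finally show ?thesis using dec lA P_def by metis
qed

lemma L7:
  assumes cw: "closed_walk G c" and eq: "pw c M = A @ es @ B"
    and vv: "v = vat G (asrc G (hd c)) (pw c M) (length A)"
  shows "subwalk G (W v es) (CW (cyc c))"
proof -
  define j where "j = length A"
  define w where "w = (\<lambda>i. c ! nat ((i + int j) mod int (length c)))"
  have cn: "c \<noteq> []" using cw unfolding closed_walk_def by simp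
  have len: "length (pw c M) = length A + length es + length B" using eq by simp
  have "w \<in> cyc c" unfolding w_def by (rule cyc_shift_mem)
  moreover have "es = map (\<lambda>i. w (int i)) [0..<length es]"
  proof (rule nth_equalityI)
    show "length es = length (map (\<lambda>i. w (int i)) [0..<length es])" by simp
  next
    fix i assume i: "i < length es"
    have lt: "j + i < M * length c" using len i j_def by simp
    have "es ! i = pw c M ! (j + i)" using eq i j_def by (simp add: nth_append)
    also have "\<dots> = c ! ((j + i) mod length c)" using pw_nth[OF lt] .
    also have "\<dots> = w (int i)" unfolding w_def cyc_shift_nth by (simp add: add.commute)
    finally show "es ! i = map (\<lambda>i. w (int i)) [0..<length es] ! i" using i by simp
  qed
  moreover have "v = asrc G (w 0)"
  proof -
    have "w 0 = c ! (j mod length c)" using cyc_shift_nth[of c j 0] w_def by simp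
    moreover have "j \<le> length (pw c M)" using len j_def by simp
    ultimately show ?thesis using pw_vat[OF cw] vv j_def by simp
  qed
  ultimately show ?thesis by auto
qed

lemma SW:
  assumes cw: "closed_walk G c" and sw: "subwalk G (W v es) (CW (cyc c))"
  shows "\<exists>K. sublist (lab v es) (pw (concat (map dd c)) K)"
proof -
  obtain M A B where AB: "pw c M = A @ es @ B" "v = vat G (asrc G (hd c)) (pw c M) (length A)"
    using H4[OF cw sw] by blast
  have "is_walk G (W (asrc G (hd c)) (A @ es @ B))" using pw_walk[OF cw, of M] AB(1) by simp
  then obtain Z where "lab (asrc G (hd c)) (A @ es @ B) = Z @ lab v es @ concat (map dd B)"
    using lab_sub AB by metis
  then have "sublist (lab v es) (lab (asrc G (hd c)) (pw c M))" using AB(1) unfolding sublist_def by metis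
  then show ?thesis using H2[OF cw] by blast
qed

end

lemma PF:
  assumes an: "a \<noteq> []" and bn: "b \<noteq> []" and eq: "pw b M = A @ pw a (length b) @ B"
  shows "cyc a = cyc b"
proof -
  define n where "n = length a"
  define m where "m = length b"
  define j where "j = length A"
  have n0: "n > 0" and m0: "m > 0" using an bn n_def m_def by auto
  have len: "M * m = j + m * n + length B" using arg_cong[OF eq, of length] n_def m_def j_def by simp
  have win: "a ! (i mod n) = b ! ((j + i) mod m)" if i: "i < n * m" for i
  proof -
    have "pw a m ! i = a ! (i mod n)" using pw_nth[of i m a] i n_def m_def by (simp add: mult.commute)
    moreover have "pw b M ! (j + i) = (pw a m) ! i" using eq i j_def m_def n_def by (simp add: nth_append mult.commute)
    moreover have "pw b M ! (j + i) = b ! ((j + i) mod m)" using pw_nth[of "j + i" M b] i len m_def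
      by (simp add: mult.commute)
    ultimately show ?thesis by simp
  qed
  have claim: "a ! nat (k mod int n) = b ! nat ((k + int j) mod int m)" for k :: int
  proof -
    define i where "i = nat (k mod int (n * m))"
    have nm0: "int (n * m) > 0" using n0 m0 by simp
    have ii: "int i = k mod int (n * m)" using i_def nm0 by simp
    have ilt: "i < n * m" using i_def nm0 by (simp add: nat_less_iff)
    have "int (i mod n) = int i mod int n" by (simp add: of_nat_mod)
    also have "\<dots> = (k mod int (n * m)) mod int n" using ii by simp
    also have "\<dots> = k mod int n" by (simp add: mod_mod_cancel)
    finally have 1: "nat (k mod int n) = i mod n" by simp
    have "int ((j + i) mod m) = (int j + int i) mod int m" by (simp add: of_nat_mod)
    also have "\<dots> = (int j + (k mod int (n * m)) mod int m) mod int m" using ii by (simp add: mod_add_right_eq)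
    also have "(k mod int (n * m)) mod int m = k mod int m" by (simp add: mod_mod_cancel)
    also have "(int j + k mod int m) mod int m = (k + int j) mod int m" by (simp add: mod_add_right_eq add.commute)
    finally have 2: "nat ((k + int j) mod int m) = (j + i) mod m" by simp
    show ?thesis using win[OF ilt] 1 2 by simp
  qed
  show ?thesis
  proof
    show "cyc a \<subseteq> cyc b"
    proof
      fix w assume "w \<in> cyc a"
      then obtain k where k: "w = (\<lambda>i. a ! nat ((i + k) mod int n))" unfolding cyc_def n_def by auto
      have "w = (\<lambda>i. b ! nat ((i + (k + int j)) mod int m))" using k claim by (simp add: add.assoc)
      then show "w \<in> cyc b" unfolding cyc_def m_def by blast
    qed
  next
    show "cyc b \<subseteq> cyc a"
    proof
      fix w assume "w \<in> cyc b"
      then obtain k where k: "w = (\<lambda>i. b ! nat ((i + k) mod int m))" unfolding cyc_def m_def by auto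
      have "w = (\<lambda>i. a ! nat ((i + (k - int j)) mod int n))"
      proof
        fix i
        have "a ! nat ((i + (k - int j)) mod int n) = b ! nat ((i + (k - int j) + int j) mod int m)"
          using claim by simp
        then show "w i = a ! nat ((i + (k - int j)) mod int n)" using k by simp
      qed
      then show "w \<in> cyc a" unfolding cyc_def n_def by blast
    qed
  qed
qed

context AG begin

lemma circ_unique:
  assumes c1: "is_circuit G (CW S1)" and c2: "is_circuit G (CW S2)" and eq: "label G (CW S1) = label G (CW S2)"
  shows "S1 = S2"
proof -
  obtain a where a: "closed_walk G a" "S1 = cyc a" "label G (CW S1) = Cyc (cyc (concat (map dd a)))"
    using rep[OF c1] by blast
  obtain b where b: "closed_walk G b" "S2 = cyc b" "label G (CW S2) = Cyc (cyc (concat (map dd b)))"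
    using rep[OF c2] by blast
  have cx: "cyc (concat (map dd a)) = cyc (concat (map dd b))" using a(3) b(3) eq by simp
  have xa: "concat (map dd a) \<noteq> []" and xb: "concat (map dd b) \<noteq> []" using cw_x_ne a(1) b(1) by auto
  define Q where "Q = pw a (length b)"
  define va where "va = asrc G (hd a)"
  define vb where "vb = asrc G (hd b)"
  have wQ: "is_walk G (W va Q)" using pw_walk[OF a(1)] Q_def va_def by blast
  obtain K where "sublist (lab va Q) (pw (concat (map dd a)) K)"
    using H2[OF a(1), of "lab va Q" "length b"] Q_def va_def by auto
  then have "substr (Fin (lab va Q)) (Cyc (cyc (concat (map dd a))))" using subcyc[OF xa] by blast
  then have "substr (Fin (lab va Q)) (Cyc (cyc (concat (map dd b))))" using cx by simp
  then obtain K' where "sublist (lab va Q) (pw (concat (map dd b)) K')" using subcyc[OF xb] by blast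
  then obtain M X Y where MXY: "lab vb (pw b M) = X @ lab va Q @ Y" "X \<noteq> []" "Y \<noteq> []"
    using H3[OF b(1)] vb_def by blast
  have wB: "is_walk G (W vb (pw b M))" using pw_walk[OF b(1)] vb_def by blast
  obtain A B where "pw b M = A @ Q @ B" using align[OF wB wQ MXY] by blast
  then have "cyc a = cyc b" using PF cw_basic a(1) b(1) Q_def by metis
  then show ?thesis using a(2) b(2) by simp
qed

end

lemma LL1:
  assumes "X @ u @ Y = Z @ L @ D" "length Z = length X + ofs" "ofs + length L < length u"
  shows "\<exists>r. D = u ! (ofs + length L) # r"
proof -
  have "drop (length Z + length L) (X @ u @ Y) = drop (length Z + length L) (Z @ L @ D)" using assms(1) by simp
  then have "drop (ofs + length L) u @ Y = D" using assms(2,3) by simp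
  moreover have "drop (ofs + length L) u = u ! (ofs + length L) # drop (Suc (ofs + length L)) u"
    using assms(3) by (simp add: Cons_nth_drop_Suc)
  ultimately show ?thesis by auto
qed

lemma LL2:
  assumes "X @ u @ Y = Z @ L @ D" "length Z = length X + ofs" "length u < ofs + length L" "ofs \<le> length u"
  shows "\<exists>r. Y = L ! (length u - ofs) # r"
proof -
  have "drop (length X + length u) (X @ u @ Y) = drop (length X + length u) (Z @ L @ D)" using assms(1) by simp
  then have "Y = drop (length u - ofs) L @ D" using assms(2,3,4) by simp
  moreover have "drop (length u - ofs) L = L ! (length u - ofs) # drop (Suc (length u - ofs)) L"
    using assms(3,4) by (simp add: Cons_nth_drop_Suc)
  ultimately show ?thesis by auto
qed

lemma LL3:
  assumes "X @ u @ Y = Z @ L @ D" "length Z = length X + ofs" "0 < ofs" "ofs \<le> length u"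
  shows "Z = X @ take (ofs - 1) u @ [u ! (ofs - 1)]"
proof -
  have "take (length Z) (X @ u @ Y) = take (length Z) (Z @ L @ D)" using assms(1) by simp
  then have "X @ take ofs u = Z" using assms(2,4) by simp
  moreover have "take ofs u = take (ofs - 1) u @ [u ! (ofs - 1)]"
    using assms(3,4) take_Suc_conv_app_nth[of "ofs - 1" u] by simp
  ultimately show ?thesis by simp
qed

lemma LL4:
  assumes "X @ u @ Y = Z @ L @ D" "length Z + k = length X + ofs" "ofs < k" "k \<le> length L"
  shows "X = butlast X @ [L ! (k - ofs - 1)]"
proof -
  have "X \<noteq> []" using assms(2,3) by auto
  have "(X @ u @ Y) ! (length X - 1) = last X" using \<open>X \<noteq> []\<close> by (simp add: nth_append last_conv_nth)
  moreover have "(Z @ L @ D) ! (length X - 1) = L ! (k - ofs - 1)"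
  proof -
    have "length Z \<le> length X - 1" using assms(2,3) by simp
    moreover have "length X - 1 - length Z = k - ofs - 1" using assms(2,3) by simp
    moreover have "k - ofs - 1 < length L" using assms(3,4) by simp
    ultimately show ?thesis by (simp add: nth_append)
  qed
  ultimately have "last X = L ! (k - ofs - 1)" using assms(1) by simp
  then show ?thesis using \<open>X \<noteq> []\<close> by (metis append_butlast_last_id)
qed

lemma LL5:
  assumes "X @ u @ Y = Z @ L @ D" "length Z = length X" "length L = length u"
  shows "L = u"
  using assms by (metis append_eq_append_conv)

context AG begin

lemma walk_sub_walk:
  assumes "is_walk G (W u fs)" "fs = A @ es @ B" "v = vat G u fs (length A)"
  shows "is_walk G (W v es)"
proof -
  have "is_walk G (W (vat G u A (length A)) (es @ B))" using assms(1,2) walk_append by simp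
  moreover have "vat G u A (length A) = v" using assms(2,3) vat_append[of "length A" A u "es @ B"] by simp
  ultimately show ?thesis using walk_append by auto
qed

lemma subwalk_ww_trans:
  assumes "subwalk G (W a as) (W b bs)" "subwalk G (W b bs) (W c cs)"
  shows "subwalk G (W a as) (W c cs)"
proof -
  obtain A1 B1 where 1: "bs = A1 @ as @ B1" "a = vat G b bs (length A1)" using assms(1) by auto
  obtain A2 B2 where 2: "cs = A2 @ bs @ B2" "b = vat G c cs (length A2)" using assms(2) by auto
  have "vat G c cs (length A2 + length A1) = vat G (vat G c A2 (length A2)) (bs @ B2) (length A1)"
    using 2(1) vat_append2[of c A2 "bs @ B2" "length A1"] by simp
  also have "vat G c A2 (length A2) = b" using 2 vat_append[of "length A2" A2 c "bs @ B2"] by simp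
  also have "vat G b (bs @ B2) (length A1) = a" using 1 vat_append[of "length A1" bs b B2] by simp
  finally have "a = vat G c cs (length (A2 @ A1))" by simp
  moreover have "cs = (A2 @ A1) @ as @ (B1 @ B2)" using 1 2 by simp
  ultimately show ?thesis by (simp only: subwalk.simps) blast
qed

lemma subwalk_lab:
  assumes "is_walk G (W b bs)" "subwalk G (W a as) (W b bs)"
  shows "sublist (lab a as) (lab b bs)"
proof -
  obtain A B where AB: "bs = A @ as @ B" "a = vat G b bs (length A)" using assms(2) by auto
  then obtain Z where "lab b (A @ as @ B) = Z @ lab a as @ concat (map dd B)"
    using lab_sub assms(1) by metis
  then show ?thesis using AB(1) unfolding sublist_def by metis
qed

lemma subwalk_len:
  assumes "subwalk G (W a as) (W b bs)" "W a as \<noteq> W b bs"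
  shows "length as < length bs"
proof -
  obtain A B where AB: "bs = A @ as @ B" "a = vat G b bs (length A)" using assms(1) by auto
  show ?thesis
  proof (rule ccontr)
    assume "\<not> length as < length bs"
    then have "A = []" "B = []" using AB(1) by auto
    then show False using AB assms(2) by simp
  qed
qed

lemma circ_form:
  assumes "is_circuit G c"
  shows "\<exists>S cw. c = CW S \<and> closed_walk G cw \<and> S = cyc cw \<and> label G c = Cyc (cyc (concat (map dd cw)))
     \<and> concat (map dd cw) \<noteq> []"
proof -
  obtain S where S: "c = CW S" using assms by (cases c) auto
  then show ?thesis using rep[of S] assms cw_x_ne by metis
qed

lemma sub_mono:
  assumes "is_circuit G c" "sublist a b" "substr (Fin b) (label G c)"
  shows "substr (Fin a) (label G c)"
proof -
  obtain S cw where S: "c = CW S" "closed_walk G cw" "S = cyc cw" "label G c = Cyc (cyc (concat (map dd cw)))"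
     "concat (map dd cw) \<noteq> []" using circ_form[OF assms(1)] by blast
  then obtain K where "sublist b (pw (concat (map dd cw)) K)" using assms(3) subcyc by metis
  then have "sublist a (pw (concat (map dd cw)) K)" using assms(2) sublist_trans' by blast
  then show ?thesis using S subcyc by metis
qed

lemma sw_sub:
  assumes "is_circuit G c" "subwalk G (W v es) c"
  shows "substr (Fin (lab v es)) (label G c)"
proof -
  obtain S cw where S: "c = CW S" "closed_walk G cw" "S = cyc cw" "label G c = Cyc (cyc (concat (map dd cw)))"
     "concat (map dd cw) \<noteq> []" using circ_form[OF assms(1)] by blast
  then obtain K where "sublist (lab v es) (pw (concat (map dd cw)) K)" using SW assms(2) by metis
  then show ?thesis using S subcyc by metis
qed

lemma host:
  assumes "is_circuit G c" "substr (Fin z) (label G c)"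
  shows "\<exists>q qs X Y. is_walk G (W q qs) \<and> lab q qs = X @ z @ Y \<and> X \<noteq> [] \<and> Y \<noteq> [] \<and>
     (\<forall>A es B v. qs = A @ es @ B \<and> v = vat G q qs (length A) \<longrightarrow> subwalk G (W v es) c) \<and>
     (\<forall>z'. sublist z' (lab q qs) \<longrightarrow> substr (Fin z') (label G c))"
proof -
  obtain S cw where S: "c = CW S" "closed_walk G cw" "S = cyc cw" "label G c = Cyc (cyc (concat (map dd cw)))"
     "concat (map dd cw) \<noteq> []" using circ_form[OF assms(1)] by blast
  then obtain K where "sublist z (pw (concat (map dd cw)) K)" using assms(2) subcyc by metis
  then obtain M X Y where MXY: "lab (asrc G (hd cw)) (pw cw M) = X @ z @ Y" "X \<noteq> []" "Y \<noteq> []"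
    using H3[OF S(2)] by blast
  have w: "is_walk G (W (asrc G (hd cw)) (pw cw M))" using pw_walk[OF S(2)] by blast
  have "\<forall>A es B v. pw cw M = A @ es @ B \<and> v = vat G (asrc G (hd cw)) (pw cw M) (length A) \<longrightarrow> subwalk G (W v es) c"
    using L7[OF S(2)] S(1,3) by blast
  moreover have "\<forall>z'. sublist z' (lab (asrc G (hd cw)) (pw cw M)) \<longrightarrow> substr (Fin z') (label G c)"
    using H2[OF S(2)] S(4,5) subcyc by metis
  ultimately show ?thesis using w MXY by blast
qed

end

context AG begin

lemma sub_circ_eq: "subwalk G (CW S) c \<Longrightarrow> c = CW S"
  by (cases c) auto

lemma inc_circ:
  assumes cand: "\<forall>P\<in>PP. \<forall>c\<in>P. is_circuit G c" and x: "CW S \<in> OGA G PP"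
  shows "label G (CW S) \<in> OA ((\<lambda>P. label G ` P) ` PP) \<and> (\<exists>v\<in>verts G. substr (vlab G v) (label G (CW S)))"
proof -
  have xc: "is_circuit G (CW S)" and com: "\<forall>P\<in>PP. \<exists>c\<in>P. subwalk G (CW S) c"
    using x by (auto simp: OGA_def Let_def)
  have inP: "\<forall>P\<in>PP. CW S \<in> P" using com sub_circ_eq by metis
  obtain S' cw where S: "CW S = CW S'" "closed_walk G cw" "S' = cyc cw"
     "label G (CW S) = Cyc (cyc (concat (map dd cw)))" "concat (map dd cw) \<noteq> []"
    using circ_form[OF xc] by blast
  have "\<exists>x. x \<noteq> [] \<and> cyc (concat (map dd cw)) = cyc x" using S(5) by blast
  then have valid: "valid_word (label G (CW S))" unfolding S(4) valid_word_def by simp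
  have inX: "\<forall>C\<in>(\<lambda>P. label G ` P) ` PP. \<exists>t\<in>C. substr (label G (CW S)) t"
    using inP S(4) by force
  have maxl: "\<not> (\<exists>t. (valid_word t \<and> (\<forall>C\<in>(\<lambda>P. label G ` P) ` PP. \<exists>t'\<in>C. substr t t')) \<and>
      t \<noteq> label G (CW S) \<and> substr (label G (CW S)) t)"
  proof
    assume "\<exists>t. (valid_word t \<and> (\<forall>C\<in>(\<lambda>P. label G ` P) ` PP. \<exists>t'\<in>C. substr t t')) \<and>
      t \<noteq> label G (CW S) \<and> substr (label G (CW S)) t"
    then obtain t where "t \<noteq> label G (CW S)" "substr (label G (CW S)) t" by blast
    then show False using S(4) by (cases t) auto
  qed
  have "label G (CW S) \<in> OA ((\<lambda>P. label G ` P) ` PP)"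
    unfolding OA_def Let_def using valid inX maxl by blast
  moreover have "\<exists>v\<in>verts G. substr (vlab G v) (label G (CW S))"
  proof -
    define v0 where "v0 = asrc G (hd cw)"
    have v0V: "v0 \<in> verts G" using cw_basic[OF S(2)] walk_vert v0_def by blast
    have "sublist (vl v0) (lab v0 (pw cw 1))" using lab_pw[of v0 cw 1] by simp
    then obtain K where "sublist (vl v0) (pw (concat (map dd cw)) K)" using H2[OF S(2)] v0_def by blast
    then have "substr (Fin (vl v0)) (label G (CW S))" using S(4,5) subcyc by metis
    then show ?thesis using v0V vert_fin by metis
  qed
  ultimately show ?thesis by blast
qed

lemma inc_walk:
  assumes cand: "\<forall>P\<in>PP. \<forall>c\<in>P. is_circuit G c" and ne: "PP \<noteq> {}" and x: "W v es \<in> OGA G PP"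
  shows "label G (W v es) \<in> OA ((\<lambda>P. label G ` P) ` PP) \<and> (\<exists>u\<in>verts G. substr (vlab G u) (label G (W v es)))"
proof -
  have wk: "is_walk G (W v es)" and com: "\<forall>P\<in>PP. \<exists>c\<in>P. subwalk G (W v es) c"
    and maxw: "\<And>y. (is_walk G y \<or> is_circuit G y) \<Longrightarrow> (\<forall>P\<in>PP. \<exists>c\<in>P. subwalk G y c) \<Longrightarrow>
       subwalk G (W v es) y \<Longrightarrow> y = W v es"
    using x by (auto simp: OGA_def Let_def)
  define s where "s = lab v es"
  have lbl: "label G (W v es) = Fin s" using label_walk[OF wk] s_def by simp
  define common where "common z \<longleftrightarrow> (\<forall>P\<in>PP. \<exists>c\<in>P. substr (Fin z) (label G c))" for z
  have inX: "\<forall>C\<in>(\<lambda>P. label G ` P) ` PP. \<exists>t\<in>C. substr (Fin s) t"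
  proof
    fix C assume "C \<in> (\<lambda>P. label G ` P) ` PP"
    then obtain P where P: "P \<in> PP" "C = label G ` P" by blast
    then obtain c where "c \<in> P" "subwalk G (W v es) c" using com by blast
    then have "substr (Fin s) (label G c)" using sw_sub cand P(1) s_def by blast
    then show "\<exists>t\<in>C. substr (Fin s) t" using P(2) \<open>c \<in> P\<close> by blast
  qed
  have vert: "\<exists>u\<in>verts G. substr (vlab G u) (label G (W v es))"
  proof -
    have "v \<in> verts G" using wk walk_vert by blast
    moreover have "sublist (vl v) s" using s_def by (simp add: lab_def)
    ultimately show ?thesis using lbl vert_fin by force
  qed
  have maxl: "\<not> (\<exists>t. (valid_word t \<and> (\<forall>C\<in>(\<lambda>P. label G ` P) ` PP. \<exists>t'\<in>C. substr t t')) \<and>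
      t \<noteq> Fin s \<and> substr (Fin s) t)"
  proof
    assume "\<exists>t. (valid_word t \<and> (\<forall>C\<in>(\<lambda>P. label G ` P) ` PP. \<exists>t'\<in>C. substr t t')) \<and>
      t \<noteq> Fin s \<and> substr (Fin s) t"
    then obtain t where t: "\<forall>C\<in>(\<lambda>P. label G ` P) ` PP. \<exists>t'\<in>C. substr t t'" "t \<noteq> Fin s" "substr (Fin s) t"
      by blast
    have tP: "\<forall>P\<in>PP. \<exists>c\<in>P. substr t (label G c)"
    proof
      fix P assume P: "P \<in> PP"
      then have "label G ` P \<in> (\<lambda>P. label G ` P) ` PP" by (rule imageI)
      with t(1) have "\<exists>t'\<in>label G ` P. substr t t'" by (rule bspec)
      then obtain t' where t': "t' \<in> label G ` P" "substr t t'" by (rule bexE)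
      from t'(1) obtain c where "t' = label G c" "c \<in> P" by (rule imageE)
      then show "\<exists>c\<in>P. substr t (label G c)" using t'(2) by (intro bexI[of _ c]) simp_all
    qed
    have ext: "\<exists>b. common (s @ [b]) \<or> common (b # s)"
    proof (cases t)
      case (Fin t0)
      then have st: "sublist s t0" "s \<noteq> t0" using t by auto
      obtain ps ss where t0: "t0 = ps @ s @ ss" using st(1) unfolding sublist_def by blast
      have mono: "common z" if "sublist z t0" for z
        unfolding common_def
      proof
        fix P assume "P \<in> PP"
        then obtain c where "c \<in> P" "substr t (label G c)" using tP by blast
        then show "\<exists>c\<in>P. substr (Fin z) (label G c)"
          using sub_mono[of c z t0] cand \<open>P \<in> PP\<close> that Fin by blast
      qed
      show ?thesis
      proof (cases ss)
        case (Cons b ss')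
        then have "sublist (s @ [b]) t0" using t0 unfolding sublist_def by auto
        then show ?thesis using mono by blast
      next
        case Nil
        then have "ps \<noteq> []" using st(2) t0 by auto
        then have "t0 = butlast ps @ (last ps # s) @ []" using t0 Nil by simp
        then have "sublist (last ps # s) t0" unfolding sublist_def by blast
        then show ?thesis using mono by blast
      qed
    next
      case (Cyc T)
      then obtain w where w: "w \<in> T" "s = map (\<lambda>i. w (int i)) [0..<length s]" using t(3) by auto
      define n where "n = length s"
      have "map (\<lambda>i. w (int i)) [0..<Suc n] = map (\<lambda>i. w (int i)) [0..<n] @ [w (int n)]" by simp
      then have s2: "s @ [w (int (length s))] = map (\<lambda>i. w (int i)) [0..<length (s @ [w (int (length s))])]"
        using w(2) n_def by (metis length_append_singleton)
      have "common (s @ [w (int (length s))])" unfolding common_def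
      proof
        fix P assume "P \<in> PP"
        then obtain c where c: "c \<in> P" "substr t (label G c)" using tP by blast
        then have "label G c = Cyc T" using Cyc by (cases "label G c") auto
        then show "\<exists>c\<in>P. substr (Fin (s @ [w (int (length s))])) (label G c)"
          using c(1) w(1) s2 by (metis substr.simps(2))
      qed
      then show ?thesis by blast
    qed
    then obtain b where b: "common (s @ [b]) \<or> common (b # s)" by blast
    obtain P0 where P0: "P0 \<in> PP" using ne by blast
    show False
    proof (cases "common (s @ [b])")
      case True
      have hr: "\<exists>c\<in>P. \<exists>q A B r. is_walk G (W q (A @ es @ B)) \<and> v = vat G q (A @ es @ B) (length A) \<and>
          concat (map dd B) = b # r \<and>
          (\<forall>A' es' B' v'. A @ es @ B = A' @ es' @ B' \<and> v' = vat G q (A @ es @ B) (length A') \<longrightarrow> subwalk G (W v' es') c)"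
        if P: "P \<in> PP" for P
      proof -
        obtain c where c: "c \<in> P" "substr (Fin (s @ [b])) (label G c)" using True P unfolding common_def by blast
        obtain q qs X Y where h: "is_walk G (W q qs)" "lab q qs = X @ (s @ [b]) @ Y" "X \<noteq> []" "Y \<noteq> []"
          "\<forall>A es B v. qs = A @ es @ B \<and> v = vat G q qs (length A) \<longrightarrow> subwalk G (W v es) c"
          using host[of c "s @ [b]"] c cand P by blast
        have eq: "lab q qs = X @ lab v es @ ([b] @ Y)" using h(2) s_def by simp
        obtain A B where AB: "qs = A @ es @ B" "v = vat G q qs (length A)" "lab q A = X @ vl v"
          using align[OF h(1) wk eq h(3)] by blast
        obtain Z where Z: "lab q A = Z @ vl v" "lab q qs = Z @ lab v es @ concat (map dd B)"
          using lab_sub[of q A es B v] h(1) AB by blast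
        have "Z = X" using Z(1) AB(3) by simp
        then have "concat (map dd B) = b # Y" using Z(2) eq by simp
        moreover have "is_walk G (W q (A @ es @ B))" using h(1) AB(1) by simp
        moreover have "v = vat G q (A @ es @ B) (length A)" using AB(1,2) by simp
        moreover have "\<forall>A' es' B' v'. A @ es @ B = A' @ es' @ B' \<and> v' = vat G q (A @ es @ B) (length A') \<longrightarrow> subwalk G (W v' es') c"
          using h(5) AB(1) by simp
        ultimately show ?thesis using c(1) by blast
      qed
      obtain c0 q0 A0 B0 r0 where h0: "c0 \<in> P0" "is_walk G (W q0 (A0 @ es @ B0))"
          "v = vat G q0 (A0 @ es @ B0) (length A0)" "concat (map dd B0) = b # r0"
        using hr[OF P0] by blast
      define e where "e = hd B0"
      have B0n: "B0 \<noteq> []" using h0(4) by auto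
      have com': "\<forall>P\<in>PP. \<exists>c\<in>P. subwalk G (W v (es @ [e])) c"
      proof
        fix P assume P: "P \<in> PP"
        obtain c q A B r where h: "c \<in> P" "is_walk G (W q (A @ es @ B))" "v = vat G q (A @ es @ B) (length A)"
            "concat (map dd B) = b # r"
            "\<forall>A' es' B' v'. A @ es @ B = A' @ es' @ B' \<and> v' = vat G q (A @ es @ B) (length A') \<longrightarrow> subwalk G (W v' es') c"
          using hr[OF P] by blast
        have "B \<noteq> [] \<and> hd B = e" using next_r[OF h(2) h0(2) h(3) h0(3) h(4) h0(4)] e_def by simp
        then have "A @ es @ B = A @ (es @ [e]) @ tl B" by (cases B) auto
        then have "subwalk G (W v (es @ [e])) c" using h(3,5) by metis
        then show "\<exists>c\<in>P. subwalk G (W v (es @ [e])) c" using h(1) by blast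
      qed
      have "A0 @ es @ B0 = A0 @ (es @ [e]) @ tl B0" using B0n e_def by (cases B0) auto
      then have wk': "is_walk G (W v (es @ [e]))" using walk_sub_walk[OF h0(2), of A0 "es @ [e]" "tl B0"] h0(3) by simp
      have sw: "subwalk G (W v es) (W v (es @ [e]))" unfolding subwalk.simps
        by (rule exI[of _ "[]"], rule exI[of _ "[e]"]) simp
      have "W v (es @ [e]) = W v es" using maxw[OF _ com' sw] wk' by blast
      then show False by simp
    next
      case False
      then have Lc: "common (b # s)" using b by blast
      have hl: "\<exists>c\<in>P. \<exists>q A B r. is_walk G (W q (A @ es @ B)) \<and> v = vat G q (A @ es @ B) (length A) \<and>
          concat (map dp A) = r @ [b] \<and>
          (\<forall>A' es' B' v'. A @ es @ B = A' @ es' @ B' \<and> v' = vat G q (A @ es @ B) (length A') \<longrightarrow> subwalk G (W v' es') c)"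
        if P: "P \<in> PP" for P
      proof -
        obtain c where c: "c \<in> P" "substr (Fin (b # s)) (label G c)" using Lc P unfolding common_def by blast
        obtain q qs X Y where h: "is_walk G (W q qs)" "lab q qs = X @ (b # s) @ Y" "X \<noteq> []" "Y \<noteq> []"
          "\<forall>A es B v. qs = A @ es @ B \<and> v = vat G q qs (length A) \<longrightarrow> subwalk G (W v es) c"
          using host[of c "b # s"] c cand P by blast
        have eq: "lab q qs = (X @ [b]) @ lab v es @ Y" using h(2) s_def by simp
        obtain A B where AB: "qs = A @ es @ B" "v = vat G q qs (length A)" "lab q A = (X @ [b]) @ vl v"
          using align[OF h(1) wk eq _ h(4)] by blast
        have wA: "is_walk G (W q A)" using h(1) AB(1) walk_append by simp
        have "vat G q A (length A) = v" using AB(1,2) vat_append[of "length A" A q "es @ B"] by simp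
        then have "lab q A = concat (map dp A) @ vl v" using lab_dp[OF wA] by simp
        then have "concat (map dp A) = X @ [b]" using AB(3) by simp
        moreover have "is_walk G (W q (A @ es @ B))" using h(1) AB(1) by simp
        moreover have "v = vat G q (A @ es @ B) (length A)" using AB(1,2) by simp
        moreover have "\<forall>A' es' B' v'. A @ es @ B = A' @ es' @ B' \<and> v' = vat G q (A @ es @ B) (length A') \<longrightarrow> subwalk G (W v' es') c"
          using h(5) AB(1) by simp
        ultimately show ?thesis using c(1) by blast
      qed
      obtain c0 q0 A0 B0 r0 where h0: "c0 \<in> P0" "is_walk G (W q0 (A0 @ es @ B0))"
          "v = vat G q0 (A0 @ es @ B0) (length A0)" "concat (map dp A0) = r0 @ [b]"
        using hl[OF P0] by blast
      define e where "e = last A0"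
      have A0n: "A0 \<noteq> []" using h0(4) by auto
      have dec: "A @ es @ B = butlast A @ (e # es) @ B \<and> asrc G e = vat G q (A @ es @ B) (length (butlast A))"
        if wq: "is_walk G (W q (A @ es @ B))" and An: "A \<noteq> []" and lA: "last A = e" for q A B
      proof -
        obtain A' where A': "A = A' @ [e]" using An lA by (metis append_butlast_last_id)
        then have bl: "butlast A = A'" by simp
        have eqA: "A @ es @ B = A' @ (e # es @ B)" using A' by simp
        have "is_walk G (W q (A' @ (e # es @ B)))" using wq[unfolded eqA] .
        then have "is_walk G (W (vat G q A' (length A')) (e # es @ B))" using walk_append by blast
        then have s: "asrc G e = vat G q A' (length A')" using walk_Cons by blast
        have "vat G q (A' @ (e # es @ B)) (length A') = vat G q A' (length A')"
          using vat_append[of "length A'" A' q "e # es @ B"] by simp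
        then have "asrc G e = vat G q (A @ es @ B) (length (butlast A))" using s unfolding eqA bl by simp
        moreover have "A @ es @ B = butlast A @ (e # es) @ B" unfolding bl eqA by simp
        ultimately show ?thesis by blast
      qed
      have com': "\<forall>P\<in>PP. \<exists>c\<in>P. subwalk G (W (asrc G e) (e # es)) c"
      proof
        fix P assume P: "P \<in> PP"
        obtain c q A B r where h: "c \<in> P" "is_walk G (W q (A @ es @ B))" "v = vat G q (A @ es @ B) (length A)"
            "concat (map dp A) = r @ [b]"
            "\<forall>A' es' B' v'. A @ es @ B = A' @ es' @ B' \<and> v' = vat G q (A @ es @ B) (length A') \<longrightarrow> subwalk G (W v' es') c"
          using hl[OF P] by blast
        have "A \<noteq> [] \<and> last A = e" using next_l[OF h(2) h0(2) h(3) h0(3) h(4) h0(4)] e_def by simp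
        then have "A @ es @ B = butlast A @ (e # es) @ B \<and> asrc G e = vat G q (A @ es @ B) (length (butlast A))"
          using dec[OF h(2)] by blast
        then have "subwalk G (W (asrc G e) (e # es)) c" using h(5) by blast
        then show "\<exists>c\<in>P. subwalk G (W (asrc G e) (e # es)) c" using h(1) by blast
      qed
      have d0: "A0 @ es @ B0 = butlast A0 @ (e # es) @ B0 \<and> asrc G e = vat G q0 (A0 @ es @ B0) (length (butlast A0))"
        using dec[OF h0(2) A0n] e_def by simp
      have d0': "A0 @ es @ B0 = butlast A0 @ (e # es) @ B0" and
        d0'': "asrc G e = vat G q0 (A0 @ es @ B0) (length (butlast A0))" using d0 by blast+
      have wk': "is_walk G (W (asrc G e) (e # es))" by (rule walk_sub_walk[OF h0(2) d0' d0''])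
      have vte: "v = atgt G e"
        using h0(3) vat_append[of "length A0" A0 q0 "es @ B0"] vat_last[OF A0n] e_def by simp
      have sw: "subwalk G (W v es) (W (asrc G e) (e # es))" unfolding subwalk.simps
        by (rule exI[of _ "[e]"], rule exI[of _ "[]"]) (simp add: vat_Cons_Suc vte)
      have "W (asrc G e) (e # es) = W v es" using maxw[OF _ com' sw] wk' by blast
      then show False by simp
    qed
  qed
  have "label G (W v es) \<in> OA ((\<lambda>P. label G ` P) ` PP)"
    unfolding OA_def Let_def lbl using inX maxl by (auto simp: valid_word_def)
  then show ?thesis using vert by blast
qed

end

context AG begin

lemma ball_img_iff: "(\<forall>C\<in>(\<lambda>P. label G ` P) ` PP. \<exists>t\<in>C. Q t) \<longleftrightarrow> (\<forall>P\<in>PP. \<exists>c\<in>P. Q (label G c))"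
proof
  assume L: "\<forall>C\<in>(\<lambda>P. label G ` P) ` PP. \<exists>t\<in>C. Q t"
  show "\<forall>P\<in>PP. \<exists>c\<in>P. Q (label G c)"
  proof
    fix P assume "P \<in> PP"
    then have "label G ` P \<in> (\<lambda>P. label G ` P) ` PP" by (rule imageI)
    with L have "\<exists>t\<in>label G ` P. Q t" by (rule bspec)
    then obtain t where t: "t \<in> label G ` P" "Q t" by (rule bexE)
    from t(1) obtain c where c: "t = label G c" "c \<in> P" by (rule imageE)
    show "\<exists>c\<in>P. Q (label G c)"
    proof (rule bexI[of _ c])
      show "Q (label G c)" using c(1) t(2) by (rule subst)
      show "c \<in> P" by (rule c(2))
    qed
  qed
next
  assume R: "\<forall>P\<in>PP. \<exists>c\<in>P. Q (label G c)"
  show "\<forall>C\<in>(\<lambda>P. label G ` P) ` PP. \<exists>t\<in>C. Q t"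
  proof
    fix C assume "C \<in> (\<lambda>P. label G ` P) ` PP"
    then obtain P where P: "C = label G ` P" "P \<in> PP" by (rule imageE)
    from R P(2) have "\<exists>c\<in>P. Q (label G c)" by (rule bspec)
    then obtain c where c: "c \<in> P" "Q (label G c)" by (rule bexE)
    show "\<exists>t\<in>C. Q t"
    proof (rule bexI[of _ "label G c"])
      show "Q (label G c)" by (rule c(2))
      show "label G c \<in> C" unfolding P(1) using c(1) by (rule imageI)
    qed
  qed
qed

lemma OA_memD:
  assumes "s \<in> OA ((\<lambda>P. label G ` P) ` PP)"
  shows "valid_word s \<and> (\<forall>P\<in>PP. \<exists>c\<in>P. substr s (label G c)) \<and>
    (\<forall>t. valid_word t \<and> (\<forall>P\<in>PP. \<exists>c\<in>P. substr t (label G c)) \<and> substr s t \<longrightarrow> t = s)"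
proof -
  define X where "X = {s. valid_word s \<and> (\<forall>C\<in>(\<lambda>P. label G ` P) ` PP. \<exists>t\<in>C. substr s t)}"
  have m: "s \<in> {s \<in> X. \<not> (\<exists>t\<in>X. t \<noteq> s \<and> substr s t)}" using assms unfolding OA_def Let_def X_def .
  then have m0: "s \<in> X \<and> \<not> (\<exists>t\<in>X. t \<noteq> s \<and> substr s t)" by (rule CollectD)
  have m1: "valid_word s \<and> (\<forall>C\<in>(\<lambda>P. label G ` P) ` PP. \<exists>t\<in>C. substr s t)"
    using conjunct1[OF m0] unfolding X_def by (rule CollectD)
  have c1: "\<forall>P\<in>PP. \<exists>c\<in>P. substr s (label G c)"
    using ball_img_iff[where Q = "\<lambda>t. substr s t"] conjunct2[OF m1] by (rule iffD1)
  have c2: "\<forall>t. valid_word t \<and> (\<forall>P\<in>PP. \<exists>c\<in>P. substr t (label G c)) \<and> substr s t \<longrightarrow> t = s"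
  proof (intro allI impI)
    fix t assume a: "valid_word t \<and> (\<forall>P\<in>PP. \<exists>c\<in>P. substr t (label G c)) \<and> substr s t"
    have "\<forall>C\<in>(\<lambda>P. label G ` P) ` PP. \<exists>t'\<in>C. substr t t'"
      using ball_img_iff[where Q = "\<lambda>t'. substr t t'"] conjunct1[OF conjunct2[OF a]] by (rule iffD2)
    then have tX: "t \<in> X" unfolding X_def by (intro CollectI conjI conjunct1[OF a])
    show "t = s"
    proof (rule ccontr)
      assume "t \<noteq> s"
      then have "\<exists>t\<in>X. t \<noteq> s \<and> substr s t" using tX conjunct2[OF conjunct2[OF a]] by blast
      then show False using conjunct2[OF m0] by contradiction
    qed
  qed
  show ?thesis using conjunct1[OF m1] c1 c2 by (intro conjI)
qed

lemma OGA_iff: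
  "x \<in> OGA G PP \<longleftrightarrow> (is_walk G x \<or> is_circuit G x) \<and> (\<forall>P\<in>PP. \<exists>c\<in>P. subwalk G x c) \<and>
    (\<forall>y. (is_walk G y \<or> is_circuit G y) \<and> (\<forall>P\<in>PP. \<exists>c\<in>P. subwalk G y c) \<and> subwalk G x y \<longrightarrow> y = x)"
proof -
  have "x \<in> OGA G PP \<longleftrightarrow> ((is_walk G x \<or> is_circuit G x) \<and> (\<forall>P\<in>PP. \<exists>c\<in>P. subwalk G x c)) \<and>
     \<not> (\<exists>y. ((is_walk G y \<or> is_circuit G y) \<and> (\<forall>P\<in>PP. \<exists>c\<in>P. subwalk G y c)) \<and> y \<noteq> x \<and> subwalk G x y)"
    unfolding OGA_def Let_def by (simp only: mem_Collect_eq Bex_def)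
  then show ?thesis by blast
qed

lemma substr_Cyc: "substr (Cyc T) x \<Longrightarrow> x = Cyc T"
  by (cases x) simp_all

lemma sup_cyc:
  assumes cand: "\<forall>P\<in>PP. \<forall>c\<in>P. is_circuit G c" and ne: "PP \<noteq> {}"
    and s: "Cyc T \<in> OA ((\<lambda>P. label G ` P) ` PP)"
  shows "Cyc T \<in> label G ` OGA G PP"
proof -
  have com: "\<forall>P\<in>PP. \<exists>c\<in>P. substr (Cyc T) (label G c)" using OA_memD[OF s] by (rule conjunct1[OF conjunct2])
  have hc: "\<exists>c\<in>P. label G c = Cyc T" if P: "P \<in> PP" for P
  proof -
    from com P have "\<exists>c\<in>P. substr (Cyc T) (label G c)" by (rule bspec)
    then obtain c where c: "c \<in> P" "substr (Cyc T) (label G c)" by (rule bexE)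
    from c(2) have "label G c = Cyc T" by (rule substr_Cyc)
    with c(1) show ?thesis by (rule bexI[rotated])
  qed
  obtain P0 where P0: "P0 \<in> PP" using ne by (metis ex_in_conv)
  obtain c0 where c0: "c0 \<in> P0" "label G c0 = Cyc T" using hc[OF P0] by (rule bexE)
  have cc0: "is_circuit G c0" using cand P0 c0(1) by simp
  obtain S0 where S0: "c0 = CW S0" using cc0 by (cases c0) simp_all
  have all: "CW S0 \<in> P" if P: "P \<in> PP" for P
  proof -
    obtain c where c: "c \<in> P" "label G c = Cyc T" using hc[OF P] by (rule bexE)
    have cc: "is_circuit G c" using cand P c(1) by simp
    obtain S where S: "c = CW S" using cc by (cases c) simp_all
    have "label G (CW S) = label G (CW S0)" using c(2) c0(2) S S0 by simp
    then have "S = S0" using circ_unique[of S S0] cc cc0 S S0 by simp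
    then show "CW S0 \<in> P" using c(1) S by simp
  qed
  have "CW S0 \<in> OGA G PP" unfolding OGA_iff
  proof (intro conjI allI impI)
    show "is_walk G (CW S0) \<or> is_circuit G (CW S0)" using cc0 S0 by simp
    show "\<forall>P\<in>PP. \<exists>c\<in>P. subwalk G (CW S0) c"
    proof
      fix P assume "P \<in> PP"
      then have "CW S0 \<in> P" by (rule all)
      moreover have "subwalk G (CW S0) (CW S0)" by simp
      ultimately show "\<exists>c\<in>P. subwalk G (CW S0) c" by (rule bexI[rotated])
    qed
    fix y assume "(is_walk G y \<or> is_circuit G y) \<and> (\<forall>P\<in>PP. \<exists>c\<in>P. subwalk G y c) \<and> subwalk G (CW S0) y"
    then have "subwalk G (CW S0) y" by simp
    then show "y = CW S0" by (rule sub_circ_eq)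
  qed
  then have "label G (CW S0) \<in> label G ` OGA G PP" by (rule imageI)
  then show ?thesis using S0 c0(2) by simp
qed

end

context AG begin

lemma sup_fin:
  assumes cand: "\<forall>P\<in>PP. \<forall>c\<in>P. is_circuit G c" and ne: "PP \<noteq> {}"
    and us: "Fin u \<in> OA ((\<lambda>P. label G ` P) ` PP)" and v0V: "v0 \<in> verts G" and sv: "sublist (vl v0) u"
  shows "Fin u \<in> label G ` OGA G PP"
proof -
  note oa = OA_memD[OF us]
  have com_u: "\<forall>P\<in>PP. \<exists>c\<in>P. substr (Fin u) (label G c)" using oa by (rule conjunct1[OF conjunct2])
  have max0: "t = Fin u" if "valid_word t" "\<forall>P\<in>PP. \<exists>c\<in>P. substr t (label G c)" "substr (Fin u) t" for t
    using oa that by blast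
  have maxu: "z = u" if zc: "\<forall>P\<in>PP. \<exists>c\<in>P. substr (Fin z) (label G c)" and zs: "sublist u z" for z
  proof -
    have "valid_word (Fin z)" by (simp add: valid_word_def)
    moreover have "substr (Fin u) (Fin z)" using zs by simp
    ultimately have "Fin z = Fin u" using max0 zc by blast
    then show ?thesis by simp
  qed
  have nocyc: "\<not> substr (Fin u) (label G y)" if yc: "is_circuit G y" and ycom: "\<forall>P\<in>PP. \<exists>c\<in>P. subwalk G y c" for y
  proof
    assume a: "substr (Fin u) (label G y)"
    obtain S cw where S: "y = CW S" "closed_walk G cw" "S = cyc cw" "label G y = Cyc (cyc (concat (map dd cw)))"
       "concat (map dd cw) \<noteq> []" using circ_form[OF yc] by blast
    have "\<exists>x. x \<noteq> [] \<and> cyc (concat (map dd cw)) = cyc x" using S(5) by blast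
    then have vy: "valid_word (label G y)" unfolding S(4) valid_word_def by simp
    have cy: "\<forall>P\<in>PP. \<exists>c\<in>P. substr (label G y) (label G c)"
    proof
      fix P assume "P \<in> PP"
      with ycom have "\<exists>c\<in>P. subwalk G y c" by (rule bspec)
      then obtain c where c: "c \<in> P" "subwalk G y c" by (rule bexE)
      have "c = y" using c(2) S(1) sub_circ_eq by simp
      moreover have "substr (label G y) (label G y)" unfolding S(4) by simp
      ultimately show "\<exists>c\<in>P. substr (label G y) (label G c)" using c(1) by (intro bexI[of _ c]) simp_all
    qed
    have "label G y = Fin u" using max0[OF vy cy a] .
    then show False using S(4) by simp
  qed
  define Host where "Host P q qs X Y c \<longleftrightarrow> c \<in> P \<and> is_walk G (W q qs) \<and> lab q qs = X @ u @ Y \<and> X \<noteq> [] \<and> Y \<noteq> [] \<and>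
     (\<forall>A es B v. qs = A @ es @ B \<and> v = vat G q qs (length A) \<longrightarrow> subwalk G (W v es) c) \<and>
     (\<forall>z. sublist z (lab q qs) \<longrightarrow> substr (Fin z) (label G c))" for P q qs X Y c
  have hex: "\<exists>q qs X Y c. Host P q qs X Y c" if P: "P \<in> PP" for P
  proof -
    from com_u P have "\<exists>c\<in>P. substr (Fin u) (label G c)" by (rule bspec)
    then obtain c where c: "c \<in> P" "substr (Fin u) (label G c)" by (rule bexE)
    have cc: "is_circuit G c" using cand P c(1) by simp
    obtain q qs X Y where h: "is_walk G (W q qs)" "lab q qs = X @ u @ Y" "X \<noteq> []" "Y \<noteq> []"
       "\<forall>A es B v. qs = A @ es @ B \<and> v = vat G q qs (length A) \<longrightarrow> subwalk G (W v es) c"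
       "\<forall>z'. sublist z' (lab q qs) \<longrightarrow> substr (Fin z') (label G c)"
      using host[OF cc c(2)] by blast
    have "Host P q qs X Y c" unfolding Host_def using c(1) h by (intro conjI) simp_all
    then show ?thesis by blast
  qed
  define Al where "Al q qs X v es ofs \<longleftrightarrow> (\<exists>A B. qs = A @ es @ B \<and> v = vat G q qs (length A) \<and>
       length (lab q A) = length X + ofs + length (vl v))" for q qs and X :: "'a list" and v es ofs
  define Inv where "Inv v es ofs \<longleftrightarrow> ofs + length (lab v es) \<le> length u \<and>
       (\<forall>P q qs X Y c. P \<in> PP \<and> Host P q qs X Y c \<longrightarrow> Al q qs X v es ofs)" for v es ofs
  have dcmp: "\<exists>Z. lab q A = Z @ vl v \<and> X @ u @ Y = Z @ lab v es @ concat (map dd B) \<and> length Z = length X + ofs"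
    if h: "Host P q qs X Y c" and d: "qs = A @ es @ B" "v = vat G q qs (length A)"
      "length (lab q A) = length X + ofs + length (vl v)" for P q qs X Y c A es B v ofs
  proof -
    have w: "is_walk G (W q (A @ es @ B))" and l: "lab q qs = X @ u @ Y" using h d(1) unfolding Host_def by simp_all
    obtain Z where Z: "lab q A = Z @ vl v" "lab q (A @ es @ B) = Z @ lab v es @ concat (map dd B)"
      using lab_sub[OF w] d by metis
    have "length Z = length X + ofs" using Z(1) d(3) by simp
    then show ?thesis using Z l d(1) by simp
  qed
  have stick: "z = u" if sz: "\<And>P q qs X Y c. P \<in> PP \<Longrightarrow> Host P q qs X Y c \<Longrightarrow> sublist z (lab q qs)"
    and uz: "sublist u z" for z
  proof (rule maxu[OF _ uz])
    show "\<forall>P\<in>PP. \<exists>c\<in>P. substr (Fin z) (label G c)"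
    proof
      fix P assume P: "P \<in> PP"
      then obtain q qs X Y c where h: "Host P q qs X Y c" using hex by blast
      have "sublist z (lab q qs)" using sz[OF P h] .
      then have "substr (Fin z) (label G c)" using h unfolding Host_def by blast
      moreover have "c \<in> P" using h unfolding Host_def by blast
      ultimately show "\<exists>c\<in>P. substr (Fin z) (label G c)" by (intro bexI[of _ c])
    qed
  qed
  obtain P0 where P0: "P0 \<in> PP" using ne by (metis ex_in_conv)
  obtain q0 qs0 X0 Y0 c0 where h0: "Host P0 q0 qs0 X0 Y0 c0" using hex[OF P0] by blast
  obtain u1 u2 where u12: "u = u1 @ vl v0 @ u2" using sv unfolding sublist_def by blast
  have inv0: "Inv v0 [] (length u1)"
    unfolding Inv_def
  proof (intro conjI allI impI)
    show "length u1 + length (lab v0 []) \<le> length u" using u12 by simp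
    fix P q qs X Y c assume a: "P \<in> PP \<and> Host P q qs X Y c"
    then have w: "is_walk G (W q qs)" and l: "lab q qs = X @ u @ Y" and Xn: "X \<noteq> []" and Yn: "Y \<noteq> []"
      unfolding Host_def by simp_all
    have l2: "lab q qs = (X @ u1) @ lab v0 [] @ (u2 @ Y)" using l u12 by simp
    have w0: "is_walk G (W v0 [])" using v0V by simp
    obtain A B where AB: "qs = A @ [] @ B" "v0 = vat G q qs (length A)" "lab q A = (X @ u1) @ vl v0"
      using align[OF w w0 l2] Xn Yn by blast
    show "Al q qs X v0 [] (length u1)" unfolding Al_def using AB by (intro exI[of _ A] exI[of _ B]) simp
  qed
  have bound: "length (fst (snd tr)) < Suc (length qs0)" if "Inv (fst tr) (fst (snd tr)) (snd (snd tr))" for tr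
  proof -
    have "Al q0 qs0 X0 (fst tr) (fst (snd tr)) (snd (snd tr))" using that h0 P0 unfolding Inv_def by blast
    then obtain A B where "qs0 = A @ fst (snd tr) @ B" unfolding Al_def by blast
    then show ?thesis by simp
  qed
  obtain tr where tr: "Inv (fst tr) (fst (snd tr)) (snd (snd tr))"
     "\<forall>tr'. Inv (fst tr') (fst (snd tr')) (snd (snd tr')) \<longrightarrow> length (fst (snd tr')) \<le> length (fst (snd tr))"
    using ex_has_greatest_nat[of "\<lambda>tr. Inv (fst tr) (fst (snd tr)) (snd (snd tr))" "(v0, [], length u1)"
        "\<lambda>tr. length (fst (snd tr))" "Suc (length qs0)"] inv0 bound by auto
  obtain v es ofs where tre: "tr = (v, es, ofs)" by (cases tr) auto
  have inv: "Inv v es ofs" using tr(1) tre by simp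
  have imax: "length es' \<le> length es" if "Inv v' es' ofs'" for v' es' ofs'
    using tr(2) tre that by (metis fst_conv snd_conv)
  have iv1: "ofs + length (lab v es) \<le> length u" using inv unfolding Inv_def by blast
  have iv2: "Al q qs X v es ofs" if "P \<in> PP" "Host P q qs X Y c" for P q qs X Y c
    using inv that unfolding Inv_def by blast
  have alh: "\<exists>A B Z. qs = A @ es @ B \<and> v = vat G q qs (length A) \<and> length (lab q A) = length X + ofs + length (vl v) \<and>
       lab q A = Z @ vl v \<and> X @ u @ Y = Z @ lab v es @ concat (map dd B) \<and> length Z = length X + ofs"
    if P: "P \<in> PP" and h: "Host P q qs X Y c" for P q qs X Y c
  proof -
    obtain A B where AB: "qs = A @ es @ B" "v = vat G q qs (length A)" "length (lab q A) = length X + ofs + length (vl v)"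
      using iv2[OF P h] unfolding Al_def by blast
    obtain Z where "lab q A = Z @ vl v \<and> X @ u @ Y = Z @ lab v es @ concat (map dd B) \<and> length Z = length X + ofs"
      using dcmp[OF h AB] by blast
    then show ?thesis using AB by blast
  qed
  have hw: "is_walk G (W q qs)" "lab q qs = X @ u @ Y" "X \<noteq> []" "Y \<noteq> []" "c \<in> P"
    if "Host P q qs X Y c" for P q qs X Y c using that unfolding Host_def by simp_all
  have hsub: "subwalk G (W v' es') c" if "Host P q qs X Y c" "qs = A @ es' @ B" "v' = vat G q qs (length A)"
    for P q qs X Y c A es' B v' using that unfolding Host_def by blast
  have wv: "is_walk G (W v es)"
  proof -
    obtain A B Z where "qs0 = A @ es @ B" "v = vat G q0 qs0 (length A)" using alh[OF P0 h0] by blast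
    then show ?thesis using walk_sub_walk hw(1)[OF h0] by blast
  qed
  have R: "ofs + length (lab v es) = length u"
  proof (rule ccontr)
    assume "ofs + length (lab v es) \<noteq> length u"
    then have lt: "ofs + length (lab v es) < length u" using iv1 by simp
    define b where "b = u ! (ofs + length (lab v es))"
    have nxt: "\<exists>A B r. qs = A @ es @ B \<and> v = vat G q qs (length A) \<and> length (lab q A) = length X + ofs + length (vl v) \<and>
        concat (map dd B) = b # r" if P: "P \<in> PP" and h: "Host P q qs X Y c" for P q qs X Y c
    proof -
      obtain A B Z where AB: "qs = A @ es @ B" "v = vat G q qs (length A)" "length (lab q A) = length X + ofs + length (vl v)"
          "X @ u @ Y = Z @ lab v es @ concat (map dd B)" "length Z = length X + ofs"
        using alh[OF P h] by blast
      obtain r where "concat (map dd B) = b # r" using LL1[OF AB(4) AB(5) lt] b_def by blast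
      then show ?thesis using AB(1,2,3) by blast
    qed
    obtain A0 B0 r0 where ab0: "qs0 = A0 @ es @ B0" "v = vat G q0 qs0 (length A0)"
        "length (lab q0 A0) = length X0 + ofs + length (vl v)" "concat (map dd B0) = b # r0"
      using nxt[OF P0 h0] by blast
    define e where "e = hd B0"
    have w0: "is_walk G (W q0 (A0 @ es @ B0))" using hw(1)[OF h0] ab0(1) by simp
    have v0': "v = vat G q0 (A0 @ es @ B0) (length A0)" using ab0(1,2) by simp
    have alE: "Al q qs X v (es @ [e]) ofs" if P: "P \<in> PP" and h: "Host P q qs X Y c" for P q qs X Y c
    proof -
      obtain A B r where AB: "qs = A @ es @ B" "v = vat G q qs (length A)" "length (lab q A) = length X + ofs + length (vl v)"
          "concat (map dd B) = b # r" using nxt[OF P h] by blast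
      have w: "is_walk G (W q (A @ es @ B))" using hw(1)[OF h] AB(1) by simp
      have "B \<noteq> [] \<and> B0 \<noteq> [] \<and> hd B = hd B0"
        using next_r[OF w w0 _ v0' AB(4) ab0(4)] AB(1,2) by simp
      then have "qs = A @ (es @ [e]) @ tl B" using AB(1) e_def by (cases B) simp_all
      then show ?thesis unfolding Al_def using AB(2,3) by (intro exI[of _ A] exI[of _ "tl B"]) simp
    qed
    have le: "lab v (es @ [e]) = lab v es @ dd e" using lab_append[of v es "[e]"] by simp
    show False
    proof (cases "ofs + length (lab v (es @ [e])) \<le> length u")
      case True
      have "Inv v (es @ [e]) ofs" unfolding Inv_def using True alE by blast
      then show False using imax by fastforce
    next
      case False
      define g where "g = lab v (es @ [e]) ! (length u - ofs)"
      have "u @ [g] = u"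
      proof (rule stick)
        fix P q qs X Y c assume P: "P \<in> PP" and h: "Host P q qs X Y c"
        obtain A B where AB: "qs = A @ (es @ [e]) @ B" "v = vat G q qs (length A)"
            "length (lab q A) = length X + ofs + length (vl v)" using alE[OF P h] unfolding Al_def by blast
        obtain Z where Z: "X @ u @ Y = Z @ lab v (es @ [e]) @ concat (map dd B)" "length Z = length X + ofs"
          using dcmp[OF h AB] by blast
        obtain r where "Y = g # r" using LL2[OF Z(1) Z(2)] False iv1 g_def by fastforce
        then have "lab q qs = X @ (u @ [g]) @ r" using hw(2)[OF h] by simp
        then show "sublist (u @ [g]) (lab q qs)" unfolding sublist_def by blast
      next
        show "sublist u (u @ [g])" by simp
      qed
      then show False by simp
    qed
  qed
  have L: "ofs = 0"
  proof (rule ccontr)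
    assume "ofs \<noteq> 0"
    then have o0: "0 < ofs" by simp
    have ou: "ofs \<le> length u" using iv1 by simp
    define b where "b = u ! (ofs - 1)"
    have prv: "\<exists>A B. qs = A @ es @ B \<and> v = vat G q qs (length A) \<and> length (lab q A) = length X + ofs + length (vl v) \<and>
        concat (map dp A) = (X @ take (ofs - 1) u) @ [b]" if P: "P \<in> PP" and h: "Host P q qs X Y c" for P q qs X Y c
    proof -
      obtain A B Z where AB: "qs = A @ es @ B" "v = vat G q qs (length A)" "length (lab q A) = length X + ofs + length (vl v)"
          "lab q A = Z @ vl v" "X @ u @ Y = Z @ lab v es @ concat (map dd B)" "length Z = length X + ofs"
        using alh[OF P h] by blast
      have Zf: "Z = X @ take (ofs - 1) u @ [b]" using LL3[OF AB(5) AB(6) o0 ou] b_def by simp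
      have wA: "is_walk G (W q A)" using hw(1)[OF h] AB(1) walk_append by simp
      have "vat G q A (length A) = v" using AB(1,2) vat_append[of "length A" A q "es @ B"] by simp
      then have "lab q A = concat (map dp A) @ vl v" using lab_dp[OF wA] by simp
      then have "concat (map dp A) = Z" using AB(4) by simp
      then show ?thesis using AB(1,2,3) Zf by (intro exI[of _ A] exI[of _ B]) simp
    qed
    obtain A0 B0 where ab0: "qs0 = A0 @ es @ B0" "v = vat G q0 qs0 (length A0)"
        "length (lab q0 A0) = length X0 + ofs + length (vl v)" "concat (map dp A0) = (X0 @ take (ofs - 1) u) @ [b]"
      using prv[OF P0 h0] by blast
    define e where "e = last A0"
    have w0: "is_walk G (W q0 (A0 @ es @ B0))" using hw(1)[OF h0] ab0(1) by simp
    have v0': "v = vat G q0 (A0 @ es @ B0) (length A0)" using ab0(1,2) by simp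
    have lft: "\<exists>A' B. qs = A' @ (e # es) @ B \<and> asrc G e = vat G q qs (length A') \<and>
        length (lab q A') + length (dp e) = length X + ofs + length (vl (asrc G e)) \<and> atgt G e = v"
      if P: "P \<in> PP" and h: "Host P q qs X Y c" for P q qs X Y c
    proof -
      obtain A B where AB: "qs = A @ es @ B" "v = vat G q qs (length A)" "length (lab q A) = length X + ofs + length (vl v)"
          "concat (map dp A) = (X @ take (ofs - 1) u) @ [b]" using prv[OF P h] by blast
      have w: "is_walk G (W q (A @ es @ B))" using hw(1)[OF h] AB(1) by simp
      have "A \<noteq> [] \<and> A0 \<noteq> [] \<and> last A = last A0"
        using next_l[OF w w0 _ v0' AB(4) ab0(4)] AB(1,2) by simp
      then obtain A' where A': "A = A' @ [e]" using e_def by (metis append_butlast_last_id)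
      have eqs: "qs = A' @ (e # es) @ B" using AB(1) A' by simp
      have wq: "is_walk G (W q (A' @ (e # es @ B)))" using w A' by simp
      then have "is_walk G (W (vat G q A' (length A')) (e # es @ B))" using walk_append by blast
      then have se: "asrc G e = vat G q A' (length A')" and ea: "e \<in> arcs G" using walk_Cons by blast+
      have se2: "asrc G e = vat G q qs (length A')"
        using se eqs vat_append[of "length A'" A' q "e # es @ B"] by simp
      have wA: "is_walk G (W q A)" using w walk_append by blast
      have te: "atgt G e = v" using AB(1,2) vat_append[of "length A" A q "es @ B"] vat_last[of A q] A' by simp
      have "lab q A = lab q A' @ dd e" using A' lab_append[of q A' "[e]"] by simp
      moreover have "length (vl (asrc G e)) + length (dd e) = length (dp e) + length (vl v)"
        using el_split1[OF ea] el_split2[OF ea] te by (metis length_append)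
      ultimately have "length (lab q A') + length (dp e) = length X + ofs + length (vl (asrc G e))"
        using AB(3) by simp
      then show ?thesis using eqs se2 te by blast
    qed
    obtain A0' B0' where l0: "qs0 = A0' @ (e # es) @ B0'" "asrc G e = vat G q0 qs0 (length A0')" "atgt G e = v"
      using lft[OF P0 h0] by blast
    have we: "is_walk G (W (asrc G e) (e # es))" using walk_sub_walk[OF hw(1)[OF h0] l0(1,2)] .
    have le: "lab (asrc G e) (e # es) = dp e @ lab v es" using lab_Cons[OF we] l0(3) by simp
    show False
    proof (cases "length (dp e) \<le> ofs")
      case True
      have "Inv (asrc G e) (e # es) (ofs - length (dp e))" unfolding Inv_def
      proof (intro conjI allI impI)
        show "ofs - length (dp e) + length (lab (asrc G e) (e # es)) \<le> length u" using le iv1 True by simp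
        fix P q qs X Y c assume a: "P \<in> PP \<and> Host P q qs X Y c"
        obtain A' B where AB: "qs = A' @ (e # es) @ B" "asrc G e = vat G q qs (length A')"
           "length (lab q A') + length (dp e) = length X + ofs + length (vl (asrc G e))"
          using lft a by blast
        show "Al q qs X (asrc G e) (e # es) (ofs - length (dp e))" unfolding Al_def
          using AB True by (intro exI[of _ A'] exI[of _ B]) simp
      qed
      then show False using imax by fastforce
    next
      case False
      define g where "g = lab (asrc G e) (e # es) ! (length (dp e) - ofs - 1)"
      have "g # u = u"
      proof (rule stick)
        fix P q qs X Y c assume P: "P \<in> PP" and h: "Host P q qs X Y c"
        obtain A' B where AB: "qs = A' @ (e # es) @ B" "asrc G e = vat G q qs (length A')"
           "length (lab q A') + length (dp e) = length X + ofs + length (vl (asrc G e))"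
          using lft[OF P h] by blast
        have w: "is_walk G (W q (A' @ (e # es) @ B))" using hw(1)[OF h] AB(1) by simp
        obtain Z where Z: "lab q A' = Z @ vl (asrc G e)" "lab q (A' @ (e # es) @ B) = Z @ lab (asrc G e) (e # es) @ concat (map dd B)"
          using lab_sub[OF w] AB(1,2) by metis
        have eq: "X @ u @ Y = Z @ lab (asrc G e) (e # es) @ concat (map dd B)" using Z(2) AB(1) hw(2)[OF h] by simp
        have lz: "length Z + length (dp e) = length X + ofs" using Z(1) AB(3) by simp
        have "X = butlast X @ [g]" using LL4[OF eq lz] False le g_def by simp
        then have "lab q qs = butlast X @ (g # u) @ Y" using hw(2)[OF h] by (metis append.assoc append_Cons append_Nil)
        then show "sublist (g # u) (lab q qs)" unfolding sublist_def by blast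
      next
        show "sublist u (g # u)" unfolding sublist_def by (intro exI[of _ "[g]"] exI[of _ "[]"]) simp
      qed
      then show False by simp
    qed
  qed
  have labu: "lab v es = u"
  proof -
    obtain A B Z where "X0 @ u @ Y0 = Z @ lab v es @ concat (map dd B)" "length Z = length X0 + ofs"
      using alh[OF P0 h0] by blast
    then show ?thesis using LL5 R L by simp
  qed
  have comW: "\<forall>P\<in>PP. \<exists>c\<in>P. subwalk G (W v es) c"
  proof
    fix P assume P: "P \<in> PP"
    then obtain q qs X Y c where h: "Host P q qs X Y c" using hex by blast
    obtain A B Z where "qs = A @ es @ B" "v = vat G q qs (length A)" using alh[OF P h] by blast
    then have "subwalk G (W v es) c" using hsub[OF h] by blast
    then show "\<exists>c\<in>P. subwalk G (W v es) c" using hw(5)[OF h] by (intro bexI[of _ c])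
  qed
  define Yp where "Yp y \<longleftrightarrow> is_walk G (W (fst y) (snd y)) \<and> (\<forall>P\<in>PP. \<exists>c\<in>P. subwalk G (W (fst y) (snd y)) c) \<and>
      subwalk G (W v es) (W (fst y) (snd y))" for y
  have labY: "lab a as = u" if "Yp (a, as)" for a as
  proof (rule maxu)
    have ya: "is_walk G (W a as)" "\<forall>P\<in>PP. \<exists>c\<in>P. subwalk G (W a as) c" "subwalk G (W v es) (W a as)"
      using that unfolding Yp_def by simp_all
    show "sublist u (lab a as)" using subwalk_lab[OF ya(1) ya(3)] labu by simp
    show "\<forall>P\<in>PP. \<exists>c\<in>P. substr (Fin (lab a as)) (label G c)"
    proof
      fix P assume P: "P \<in> PP"
      with ya(2) have "\<exists>c\<in>P. subwalk G (W a as) c" by (rule bspec)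
      then obtain c where c: "c \<in> P" "subwalk G (W a as) c" by (rule bexE)
      have "is_circuit G c" using cand P c(1) by simp
      then have "substr (Fin (lab a as)) (label G c)" using sw_sub c(2) by blast
      then show "\<exists>c\<in>P. substr (Fin (lab a as)) (label G c)" using c(1) by (intro bexI[of _ c])
    qed
  qed
  have boundY: "length (snd y) < Suc (length qs0)" if "Yp y" for y
  proof -
    obtain a as where y: "y = (a, as)" by (cases y)
    have ya: "is_walk G (W a as)" using that y unfolding Yp_def by simp
    have "lab q0 qs0 = X0 @ lab a as @ Y0" using hw(2)[OF h0] labY that y by simp
    then obtain A B where "qs0 = A @ as @ B" using align[OF hw(1)[OF h0] ya _ hw(3)[OF h0] hw(4)[OF h0]] by blast
    then show ?thesis using y by simp
  qed
  have Y0: "Yp (v, es)" unfolding Yp_def using wv comW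
    by (simp, intro exI[of _ "[]"]) simp
  obtain ys where ys: "Yp ys" "\<forall>y. Yp y \<longrightarrow> length (snd y) \<le> length (snd ys)"
    using ex_has_greatest_nat[of Yp "(v, es)" "\<lambda>y. length (snd y)" "Suc (length qs0)"] Y0 boundY by blast
  obtain vs ess where yse: "ys = (vs, ess)" by (cases ys)
  have ysw: "is_walk G (W vs ess)" "\<forall>P\<in>PP. \<exists>c\<in>P. subwalk G (W vs ess) c" "subwalk G (W v es) (W vs ess)"
    using ys(1) yse unfolding Yp_def by simp_all
  have "W vs ess \<in> OGA G PP" unfolding OGA_iff
  proof (intro conjI allI impI)
    show "is_walk G (W vs ess) \<or> is_circuit G (W vs ess)" using ysw(1) by simp
    show "\<forall>P\<in>PP. \<exists>c\<in>P. subwalk G (W vs ess) c" by (rule ysw(2))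
    fix y assume a: "(is_walk G y \<or> is_circuit G y) \<and> (\<forall>P\<in>PP. \<exists>c\<in>P. subwalk G y c) \<and> subwalk G (W vs ess) y"
    show "y = W vs ess"
    proof (cases y)
      case (W a as)
      have wa: "is_walk G (W a as)" using a W by simp
      have "subwalk G (W v es) (W a as)" using subwalk_ww_trans[OF ysw(3)] a W by simp
      then have "Yp (a, as)" unfolding Yp_def using wa a W by simp
      then have "length as \<le> length ess" using ys(2) yse by (metis snd_conv)
      then show ?thesis using subwalk_len[of vs ess a as] a W by (metis not_less)
    next
      case (CW S)
      have yc: "is_circuit G y" using a CW by simp
      have "substr (Fin (lab vs ess)) (label G y)" using sw_sub[OF yc] a by blast
      moreover have "lab vs ess = u" using labY ys(1) yse by simp
      ultimately show ?thesis using nocyc[OF yc] a by blast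
    qed
  qed
  moreover have "label G (W vs ess) = Fin u" using label_walk[OF ysw(1)] labY ys(1) yse by simp
  ultimately show ?thesis by (metis imageI)
qed

end

theorem theorem3:
  fixes G :: "('v, 'e, 'a::finite) agraph"
    and PP :: "('v, 'e) gwalk set set"
  assumes "assembly_graph G"
    and "non_redundant G"
    and "splitting G"
    and "PP \<noteq> {}"
    and "\<forall>P\<in>PP. genome_path_candidate G P"
  shows "label G ` OGA G PP = Superstrings (OA ((\<lambda>P. label G ` P) ` PP)) (vlab G ` verts G)"
proof -
  interpret AG G using assms(1,2,3) by (unfold_locales)
  have cand: "\<forall>P\<in>PP. \<forall>c\<in>P. is_circuit G c" using assms(5) unfolding genome_path_candidate_def by simp
  show ?thesis
  proof
    show "label G ` OGA G PP \<subseteq> Superstrings (OA ((\<lambda>P. label G ` P) ` PP)) (vlab G ` verts G)"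
    proof
      fix s assume "s \<in> label G ` OGA G PP"
      then obtain x where x: "s = label G x" "x \<in> OGA G PP" by (rule imageE)
      have "label G x \<in> OA ((\<lambda>P. label G ` P) ` PP) \<and> (\<exists>v\<in>verts G. substr (vlab G v) (label G x))"
      proof (cases x)
        case (W v es)
        then show ?thesis using inc_walk[OF cand assms(4)] x(2) by simp
      next
        case (CW S)
        then show ?thesis using inc_circ[OF cand] x(2) by simp
      qed
      then obtain v where v: "label G x \<in> OA ((\<lambda>P. label G ` P) ` PP)" "v \<in> verts G" "substr (vlab G v) (label G x)"
        by (elim conjE bexE)
      have "vlab G v \<in> vlab G ` verts G" using v(2) by (rule imageI)
      then have "\<exists>w\<in>vlab G ` verts G. substr w (label G x)" using v(3) by (intro bexI[of _ "vlab G v"])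
      then show "s \<in> Superstrings (OA ((\<lambda>P. label G ` P) ` PP)) (vlab G ` verts G)"
        unfolding Superstrings_def using v(1) x(1) by simp
    qed
  next
    show "Superstrings (OA ((\<lambda>P. label G ` P) ` PP)) (vlab G ` verts G) \<subseteq> label G ` OGA G PP"
    proof
      fix s assume "s \<in> Superstrings (OA ((\<lambda>P. label G ` P) ` PP)) (vlab G ` verts G)"
      then have s: "s \<in> OA ((\<lambda>P. label G ` P) ` PP)" "\<exists>w\<in>vlab G ` verts G. substr w s"
        unfolding Superstrings_def by simp_all
      obtain w where w: "w \<in> vlab G ` verts G" "substr w s" using s(2) by (rule bexE)
      obtain v0 where v0: "w = vlab G v0" "v0 \<in> verts G" using w(1) by (rule imageE)
      have wv: "w = Fin (vl v0)" using v0 vert_fin by simp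
      show "s \<in> label G ` OGA G PP"
      proof (cases s)
        case (Fin u)
        have "sublist (vl v0) u" using w(2) wv Fin by simp
        then show ?thesis using sup_fin[OF cand assms(4) _ v0(2)] s(1) Fin by simp
      next
        case (Cyc T)
        then show ?thesis using sup_cyc[OF cand assms(4)] s(1) by simp
      qed
    qed
  qed
qed


end
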